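(* Let $K$ be a ramified quadratic extension of $\mathbb{Q}_2$, $d=2m$ with $m$ odd, $m\ge3$, and $f=a_1x_1^d+\dots+a_sx_s^d$ with all $a_i\in\mathcal{O}\setminus\{0\}$. Suppose $f$ has six distinct variables at a common level that can be split into three disjoint pairs, each pair consisting of two variables with the same $\pi$-coefficient. Then $f$ has a nontrivial zero in $K$. In particular, if $f$ has seven variables at the same level, then $f$ has a nontrivial zero in $K$.
   Context: $\mathcal{O}$ is the ring of integers of $K$ and $\pi$ the uniformizer: $\pi=\sqrt{2},\sqrt{-2},\sqrt{10},\sqrt{-10},1+\sqrt{-1},1+\sqrt{-5}$ for $K=\mathbb{Q}_2(\sqrt2),\mathbb{Q}_2(\sqrt{-2}),\mathbb{Q}_2(\sqrt{10}),\mathbb{Q}_2(\sqrt{-10}),\mathbb{Q}_2(\sqrt{-1}),\mathbb{Q}_2(\sqrt{-5})$ respectively. Each unit $u$ has a unique expansion $u=c_0+c_1\pi+c_2\pi^2+\cdots$ with $c_j\in\{0,1\}$, $c_0=1$. Writing $a_i=\pi^r u$ with $u$ a unit, the variable $x_i$ is at level $r\bmod d$ (levels are residues modulo $d$), and its $\pi$-coefficient is $c_1$ of $u$. A nontrivial zero is a point of $K^s$, not all coordinates zero, where $f$ vanishes. *)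

theory Defs
  imports Main
begin

typedef z2 = "{x :: nat \<Rightarrow> int. \<forall>n. 0 \<le> x n \<and> x n < 2^n \<and> x (Suc n) mod 2^n = x n}"
  by (rule exI[of _ "\<lambda>_. 0"]) simp

definition z2_of_int :: "int \<Rightarrow> z2" where
  "z2_of_int k = Abs_z2 (\<lambda>n. k mod 2^n)"

definition z2_add :: "z2 \<Rightarrow> z2 \<Rightarrow> z2" where
  "z2_add x y = Abs_z2 (\<lambda>n. (Rep_z2 x n + Rep_z2 y n) mod 2^n)"

definition z2_neg :: "z2 \<Rightarrow> z2" where
  "z2_neg x = Abs_z2 (\<lambda>n. (- Rep_z2 x n) mod 2^n)"

definition z2_mul :: "z2 \<Rightarrow> z2 \<Rightarrow> z2" where
  "z2_mul x y = Abs_z2 (\<lambda>n. (Rep_z2 x n * Rep_z2 y n) mod 2^n)"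

text \<open>An element (a,b) stands for a + b*sqrt D. For D in {2,-2,10,-10,-1,-5}
  the ring of integers of Q_2(sqrt D) is exactly Z_2[sqrt D].\<close>

type_synonym oelt = "z2 \<times> z2"

definition o_zero :: oelt where "o_zero = (z2_of_int 0, z2_of_int 0)"
definition o_one :: oelt where "o_one = (z2_of_int 1, z2_of_int 0)"

definition o_add :: "oelt \<Rightarrow> oelt \<Rightarrow> oelt" where
  "o_add x y = (z2_add (fst x) (fst y), z2_add (snd x) (snd y))"

definition o_sub :: "oelt \<Rightarrow> oelt \<Rightarrow> oelt" where
  "o_sub x y = (z2_add (fst x) (z2_neg (fst y)), z2_add (snd x) (z2_neg (snd y)))"

definition o_mul :: "int \<Rightarrow> oelt \<Rightarrow> oelt \<Rightarrow> oelt" where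
  "o_mul D x y =
     (z2_add (z2_mul (fst x) (fst y)) (z2_mul (z2_of_int D) (z2_mul (snd x) (snd y))),
      z2_add (z2_mul (fst x) (snd y)) (z2_mul (snd x) (fst y)))"

fun o_pow :: "int \<Rightarrow> oelt \<Rightarrow> nat \<Rightarrow> oelt" where
  "o_pow D x 0 = o_one"
| "o_pow D x (Suc n) = o_mul D (o_pow D x n) x"

definition o_pi :: "int \<Rightarrow> oelt" where
  "o_pi D = (if D \<in> {-1, -5} then (z2_of_int 1, z2_of_int 1) else (z2_of_int 0, z2_of_int 1))"

definition o_unit :: "int \<Rightarrow> oelt \<Rightarrow> bool" where
  "o_unit D u \<longleftrightarrow> (\<exists>v. o_mul D u v = o_one)"

definition o_dvd :: "int \<Rightarrow> oelt \<Rightarrow> oelt \<Rightarrow> bool" where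
  "o_dvd D x y \<longleftrightarrow> (\<exists>z. y = o_mul D x z)"

definition o_val :: "int \<Rightarrow> oelt \<Rightarrow> nat" where
  "o_val D a = (THE r. \<exists>u. o_unit D u \<and> a = o_mul D (o_pow D (o_pi D) r) u)"

definition o_upart :: "int \<Rightarrow> oelt \<Rightarrow> oelt" where
  "o_upart D a = (THE u. o_unit D u \<and> a = o_mul D (o_pow D (o_pi D) (o_val D a)) u)"

definition level :: "int \<Rightarrow> nat \<Rightarrow> oelt \<Rightarrow> nat" where
  "level D d a = o_val D a mod d"

fun pi_psum :: "int \<Rightarrow> (nat \<Rightarrow> nat) \<Rightarrow> nat \<Rightarrow> oelt" where
  "pi_psum D c 0 = o_zero"
| "pi_psum D c (Suc n) =
     o_add (pi_psum D c n) (if c n = 1 then o_pow D (o_pi D) n else o_zero)"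

text \<open>The coefficient c_1 of the unique expansion u = c_0 + c_1 pi + c_2 pi^2 + ...
  with c_j in {0,1}, c_0 = 1 (expansion = convergence of partial sums pi-adically).\<close>
definition pi_coeff :: "int \<Rightarrow> oelt \<Rightarrow> nat" where
  "pi_coeff D u = (THE c1. \<exists>c :: nat \<Rightarrow> nat. (\<forall>j. c j \<le> 1) \<and> c 0 = 1 \<and> c 1 = c1 \<and>
       (\<forall>n. o_dvd D (o_pow D (o_pi D) n) (o_sub u (pi_psum D c n))))"

definition var_pi_coeff :: "int \<Rightarrow> oelt \<Rightarrow> nat" where
  "var_pi_coeff D a = pi_coeff D (o_upart D a)"

fun diag_form :: "int \<Rightarrow> nat \<Rightarrow> (nat \<Rightarrow> oelt) \<Rightarrow> (nat \<Rightarrow> oelt) \<Rightarrow> nat \<Rightarrow> oelt" where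
  "diag_form D d a x 0 = o_zero"
| "diag_form D d a x (Suc i) = o_add (diag_form D d a x i) (o_mul D (a i) (o_pow D (x i) d))"

text \<open>Nontrivial zero; since f is a form and K = O[1/pi], a nontrivial zero in K^s
  exists iff one exists in O^s (clear denominators).\<close>
definition has_nontrivial_zero :: "int \<Rightarrow> nat \<Rightarrow> nat \<Rightarrow> (nat \<Rightarrow> oelt) \<Rightarrow> bool" where
  "has_nontrivial_zero D d s a \<longleftrightarrow>
     (\<exists>x :: nat \<Rightarrow> oelt. (\<exists>i<s. x i \<noteq> o_zero) \<and> diag_form D d a x s = o_zero)"

end

theory Submission
  imports Defs
begin


definition P :: "nat \<Rightarrow> z2 \<Rightarrow> int" where "P n x = Rep_z2 x n"

lemma P_range: "0 \<le> P n x" "P n x < 2^n"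
  using Rep_z2[of x] by (auto simp: P_def)

lemma P_Suc: "P (Suc n) x mod 2^n = P n x"
  using Rep_z2[of x] by (auto simp: P_def)

lemma P_mod: "n \<le> k \<Longrightarrow> P k x mod 2^n = P n x"
proof (induction k)
  case 0 then show ?case using P_range[of 0 x] by simp
next
  case (Suc k)
  show ?case
  proof (cases "n = Suc k")
    case True then show ?thesis using P_range[of "Suc k" x] by simp
  next
    case False
    then have "n \<le> k" using Suc by simp
    have "P (Suc k) x mod 2^n = (P (Suc k) x mod 2^k) mod 2^n"
      using \<open>n \<le> k\<close> by (simp add: mod_mod_cancel le_imp_power_dvd)
    also have "\<dots> = P n x" using P_Suc Suc.IH \<open>n \<le> k\<close> by simp
    finally show ?thesis .
  qed
qed

lemma P_self_mod: "P n x mod 2^n = P n x"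
  using P_range[of n x] by simp

lemma P_lvl0[simp]: "P 0 x = 0"
  using P_range[of 0 x] by simp

lemma z2_eq_iff: "x = y \<longleftrightarrow> (\<forall>n. P n x = P n y)"
  by (auto simp: P_def Rep_z2_inject[symmetric])

definition coh :: "(nat \<Rightarrow> int) \<Rightarrow> bool" where
  "coh g \<longleftrightarrow> (\<forall>n. g (Suc n) mod 2^n = g n mod 2^n)"

lemma Rep_Abs_coh:
  assumes "coh g"
  shows "P n (Abs_z2 (\<lambda>n. g n mod 2^n)) = g n mod 2^n"
proof -
  have "(\<lambda>n. g n mod 2^n) \<in> {x :: nat \<Rightarrow> int. \<forall>n. 0 \<le> x n \<and> x n < 2^n \<and> x (Suc n) mod 2^n = x n}"
    using assms by (auto simp: coh_def mod_mod_cancel)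
  then show ?thesis by (simp add: P_def Abs_z2_inverse)
qed

lemma coh_P: "coh (\<lambda>n. P n x)"
  by (simp add: coh_def P_Suc P_self_mod)

lemma coh_add: "coh f \<Longrightarrow> coh g \<Longrightarrow> coh (\<lambda>n. f n + g n)"
  unfolding coh_def by (metis mod_add_eq)

lemma coh_mul: "coh f \<Longrightarrow> coh g \<Longrightarrow> coh (\<lambda>n. f n * g n)"
  unfolding coh_def by (metis mod_mult_eq)

lemma coh_neg: "coh f \<Longrightarrow> coh (\<lambda>n. - f n)"
  unfolding coh_def by (metis mod_minus_eq)

lemma coh_const: "coh (\<lambda>n. k)"
proof -
  have "k mod 2 ^ Suc n mod 2 ^ n = k mod 2 ^ n" for n
    by (simp add: mod_mod_cancel)
  then show ?thesis unfolding coh_def by simp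
qed

lemma P_z2_add: "P n (z2_add x y) = (P n x + P n y) mod 2^n"
  unfolding z2_add_def using Rep_Abs_coh[OF coh_add[OF coh_P coh_P]] by (simp add: P_def)

lemma P_z2_mul: "P n (z2_mul x y) = (P n x * P n y) mod 2^n"
  unfolding z2_mul_def using Rep_Abs_coh[OF coh_mul[OF coh_P coh_P]] by (simp add: P_def)

lemma P_z2_neg: "P n (z2_neg x) = (- P n x) mod 2^n"
  unfolding z2_neg_def using Rep_Abs_coh[OF coh_neg[OF coh_P]] by (simp add: P_def)

lemma P_z2_of_int: "P n (z2_of_int k) = k mod 2^n"
  unfolding z2_of_int_def using Rep_Abs_coh[OF coh_const] by simp

instantiation z2 :: comm_ring_1
begin
definition "zero_z2 = z2_of_int 0"
definition "one_z2 = z2_of_int 1"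
definition "plus_z2 = z2_add"
definition "times_z2 = z2_mul"
definition "uminus_z2 = z2_neg"
definition "minus_z2 x y = z2_add x (z2_neg y)"
instance
proof
  fix a b c :: z2
  show "a + b + c = a + (b + c)"
    by (simp add: z2_eq_iff plus_z2_def P_z2_add mod_add_left_eq mod_add_right_eq add.assoc)
  show "a + b = b + a"
    by (simp add: z2_eq_iff plus_z2_def P_z2_add add.commute)
  show "0 + a = a"
    by (simp add: z2_eq_iff plus_z2_def zero_z2_def P_z2_add P_z2_of_int P_self_mod)
  show "- a + a = 0"
    by (simp add: z2_eq_iff plus_z2_def zero_z2_def uminus_z2_def P_z2_add P_z2_neg P_z2_of_int mod_add_left_eq)
  show "a - b = a + - b"
    by (simp add: minus_z2_def plus_z2_def uminus_z2_def)
  show "a * b * c = a * (b * c)"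
    by (simp add: z2_eq_iff times_z2_def P_z2_mul mod_mult_left_eq mod_mult_right_eq mult.assoc)
  show "a * b = b * a"
    by (simp add: z2_eq_iff times_z2_def P_z2_mul mult.commute)
  show "1 * a = a"
  proof -
    have "(1 mod 2^n * P n a) mod 2^n = P n a" for n
    proof (cases n)
      case 0 then show ?thesis by simp
    next
      case (Suc k)
      have "(1::int) \<le> 2^k" by simp
      then have "(1::int) < 2^n" using Suc by (simp only: power_Suc)
      then have "(1::int) mod 2^n = 1" by (meson mod_pos_pos_trivial zero_le_one)
      then show ?thesis by (simp add: P_self_mod)
    qed
    then show ?thesis by (simp add: z2_eq_iff times_z2_def one_z2_def P_z2_mul P_z2_of_int)
  qed
  show "(a + b) * c = a * c + b * c"
  proof -
    have "((x + y) mod M * z) mod M = ((x * z) mod M + (y * z) mod M) mod M" for x y z M :: int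
      by (metis distrib_right mod_add_eq mod_mult_left_eq)
    then show ?thesis by (simp add: z2_eq_iff plus_z2_def times_z2_def P_z2_add P_z2_mul)
  qed
  show "(0::z2) \<noteq> 1"
  proof
    assume "(0::z2) = 1"
    then have "P 1 (0::z2) = P 1 1" by simp
    then show False by (simp add: zero_z2_def one_z2_def P_z2_of_int)
  qed
qed
end

lemma P_0[simp]: "P n 0 = 0" by (simp add: zero_z2_def P_z2_of_int)
lemma P_1: "P n 1 = 1 mod 2^n" by (simp add: one_z2_def P_z2_of_int)
lemma P_add: "P n (x + y) = (P n x + P n y) mod 2^n" by (simp add: plus_z2_def P_z2_add)
lemma P_mul: "P n (x * y) = (P n x * P n y) mod 2^n" by (simp add: times_z2_def P_z2_mul)
lemma P_neg: "P n (- x) = (- P n x) mod 2^n" by (simp add: uminus_z2_def P_z2_neg)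
lemma P_diff: "P n (x - y) = (P n x - P n y) mod 2^n"
proof -
  have "(a + (- b) mod M) mod M = (a - b) mod M" for a b M :: int by (simp add: mod_add_right_eq)
  then show ?thesis by (simp add: minus_z2_def P_z2_add P_z2_neg)
qed

lemma P_of_nat: "P n (of_nat k) = int k mod 2^n"
proof (induction k)
  case 0 then show ?case by simp
next
  case (Suc k) then show ?case by (simp add: P_add P_1 mod_add_left_eq mod_add_right_eq add.commute)
qed

lemma P_of_int: "P n (of_int k) = k mod 2^n"
proof (cases "k \<ge> 0")
  case True then show ?thesis using P_of_nat[of n "nat k"] by simp
next
  case False
  have e: "of_int k = - (of_nat (nat (-k)) :: z2)" using False by simp
  show ?thesis unfolding e P_neg P_of_nat using False by (simp add: mod_minus_eq)
qed

lemma z2_of_int_eq: "z2_of_int k = of_int k"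
  by (simp add: z2_eq_iff P_of_int P_z2_of_int)

lemma z2_simps: "z2_add x y = x + y" "z2_mul x y = x * y" "z2_neg x = - x"
  by (simp_all add: plus_z2_def times_z2_def uminus_z2_def)


lemma P_pow: "P n (x ^ k) = (P n x) ^ k mod 2^n"
proof (induction k)
  case 0 then show ?case by (simp add: P_1)
next
  case (Suc k) then show ?case by (simp add: P_mul mod_mult_left_eq mod_mult_right_eq mult.commute)
qed

lemma P_two_pow: "P n ((2::z2) ^ k) = 2 ^ k mod 2^n"
  using P_of_nat[of n "2^k"] by simp

lemma dvd_pow2_iff: "(2::z2) ^ k dvd z \<longleftrightarrow> P k z = 0"
proof
  assume "(2::z2) ^ k dvd z"
  then obtain w where "z = 2^k * w" by (auto simp: dvd_def)
  then show "P k z = 0" by (simp add: P_mul P_two_pow)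
next
  assume h: "P k z = 0"
  have dv: "(2::int)^k dvd P (n + k) z" for n
  proof -
    have "P (n + k) z mod 2^k = P k z" by (rule P_mod) simp
    then show ?thesis using h by (simp add: dvd_eq_mod_eq_0)
  qed
  define q where "q n = P (n + k) z div 2^k" for n
  have qz: "P (n + k) z = 2^k * q n" for n using dv[of n] by (simp add: q_def)
  have "coh q"
    unfolding coh_def
  proof
    fix n
    have "P (Suc n + k) z mod 2^(n+k) = P (n + k) z" by (rule P_mod) simp
    then have "(2^k * q (Suc n)) mod (2^k * 2^n) = 2^k * q n"
      using qz[of n] qz[of "Suc n"] by (metis power_add mult.commute)
    then have "2^k * (q (Suc n) mod 2^n) = 2^k * q n" by (simp only: mult_mod_right)
    then have "q (Suc n) mod 2^n = q n" by simp
    then show "q (Suc n) mod 2^n = q n mod 2^n" by (metis mod_mod_trivial)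
  qed
  define w where "w = Abs_z2 (\<lambda>n. q n mod 2^n)"
  have Pw: "P n w = q n mod 2^n" for n unfolding w_def by (rule Rep_Abs_coh[OF \<open>coh q\<close>])
  have "z = 2^k * w"
  proof (subst z2_eq_iff, intro allI)
    fix n
    have "P n z = P (n + k) z mod 2^n" by (rule P_mod[symmetric]) simp
    also have "\<dots> = (2^k * q n) mod 2^n" by (simp add: qz)
    also have "\<dots> = P n (2^k * w)"
      by (simp add: P_mul P_two_pow Pw mod_mult_left_eq mod_mult_right_eq)
    finally show "P n z = P n (2^k * w)" .
  qed
  then show "(2::z2) ^ k dvd z" by simp
qed

lemma z2_zero_if_all_dvd: "(\<And>n. (2::z2) ^ n dvd z) \<Longrightarrow> z = 0"
  by (simp add: dvd_pow2_iff z2_eq_iff)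

lemma P_eq_if_dvd: "(2::z2) ^ n dvd (x - y) \<Longrightarrow> P n x = P n y"
proof -
  assume "(2::z2) ^ n dvd (x - y)"
  then have "(P n x - P n y) mod 2^n = 0" by (simp add: dvd_pow2_iff P_diff)
  then have "P n x mod 2^n = P n y mod 2^n" by (simp add: mod_eq_dvd_iff dvd_eq_mod_eq_0)
  then show ?thesis by (simp add: P_self_mod)
qed

lemma z2_limit:
  assumes "\<And>n. (2::z2) ^ n dvd (f (Suc n) - f n)"
  shows "\<exists>y. \<forall>n. (2::z2) ^ n dvd (y - f n)"
proof -
  have e: "P n (f (Suc n)) = P n (f n)" for n using P_eq_if_dvd[OF assms] .
  have "coh (\<lambda>n. P n (f n))" unfolding coh_def
    by (simp add: P_Suc e P_self_mod)
  define y where "y = Abs_z2 (\<lambda>n. P n (f n) mod 2^n)"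
  have "P n y = P n (f n)" for n unfolding y_def
    using Rep_Abs_coh[OF \<open>coh (\<lambda>n. P n (f n))\<close>] by (simp add: P_self_mod)
  then have "(2::z2) ^ n dvd (y - f n)" for n by (simp add: dvd_pow2_iff P_diff)
  then show ?thesis by blast
qed


lemma odd_pow2_cong:
  fixes x y :: "'b::comm_ring_1"
  assumes "x = 1 + 2 * y"
  shows "2 ^ Suc n dvd x ^ (2 ^ n) - 1"
proof (induction n)
  case 0 then show ?case using assms by simp
next
  case (Suc n)
  then obtain t where t: "x ^ (2 ^ n) - 1 = 2 ^ Suc n * t" by (auto simp: dvd_def)
  have "x ^ (2 ^ Suc n) = (x ^ (2 ^ n))^2" by (simp add: power_mult[symmetric] mult.commute)
  also have "x ^ (2 ^ n) = 1 + 2 ^ Suc n * t" using t by (simp add: algebra_simps)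
  finally have "x ^ (2 ^ Suc n) - 1 = 2 ^ Suc (Suc n) * (t + 2 ^ n * t^2)"
    by (simp add: power2_eq_square algebra_simps)
  then show ?case by simp
qed

lemma P1_cases: "P 1 x = 0 \<or> P 1 x = 1"
  using P_range[of 1 x] by auto

lemma z2_decomp:
  assumes "(x::z2) \<noteq> 0"
  shows "\<exists>a x'. x = 2 ^ a * x' \<and> P 1 x' = 1"
proof -
  have ex: "\<exists>n. \<not> (2::z2) ^ Suc n dvd x"
  proof (rule ccontr)
    assume "\<not> ?thesis"
    then have "(2::z2) ^ n dvd x" for n by (cases n) auto
    then show False using assms z2_zero_if_all_dvd by blast
  qed
  define a where "a = (LEAST n. \<not> (2::z2) ^ Suc n dvd x)"
  have na: "\<not> (2::z2) ^ Suc a dvd x" unfolding a_def by (rule LeastI_ex[OF ex])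
  have "(2::z2) ^ a dvd x"
  proof (cases a)
    case 0 then show ?thesis by simp
  next
    case (Suc b)
    then have "b < a" by simp
    then show ?thesis using not_less_Least[of b "\<lambda>n. \<not> (2::z2) ^ Suc n dvd x"] Suc
      by (auto simp: a_def)
  qed
  then obtain x' where x': "x = 2 ^ a * x'" by (auto simp: dvd_def)
  have "P 1 x' = 1"
  proof (rule ccontr)
    assume "P 1 x' \<noteq> 1"
    then have "P 1 x' = 0" using P1_cases by blast
    then have "(2::z2) ^ 1 dvd x'" by (simp only: dvd_pow2_iff)
    then obtain t where "x' = 2 * t" by (auto simp: dvd_def)
    then have "x = 2 ^ Suc a * t" using x' by simp
    then show False using na by simp
  qed
  then show ?thesis using x' by blast
qed

lemma int_pow2_odd_mod: "odd (q::int) \<Longrightarrow> (2^j * q) mod 2^(Suc j) = 2^j"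
proof -
  assume "odd q"
  then obtain r where "q = 2 * r + 1" by (auto elim: oddE)
  then have "2^j * q = 2^(Suc j) * r + 2^j" by (simp add: algebra_simps)
  moreover have "(0::int) \<le> 2^j" "(2::int)^j < 2^(Suc j)" by simp_all
  ultimately show ?thesis by (simp add: mod_pos_pos_trivial)
qed

lemma z2_pow2_odd_nz: "P 1 t = 1 \<Longrightarrow> (2::z2) ^ j * t \<noteq> 0"
proof
  assume t: "P 1 t = 1" and z: "(2::z2) ^ j * t = 0"
  have "P (Suc j) t mod 2 = 1" using P_mod[of 1 "Suc j" t] t by simp
  then have "odd (P (Suc j) t)" by (simp add: odd_iff_mod_2_eq_one)
  have "P (Suc j) ((2::z2) ^ j * t) = (2^j mod 2^Suc j * P (Suc j) t) mod 2^Suc j"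
    by (simp add: P_mul P_two_pow)
  also have "\<dots> = (2^j * P (Suc j) t) mod 2^Suc j"
    by (simp add: mod_mult_left_eq)
  also have "\<dots> = 2^j" using int_pow2_odd_mod[OF \<open>odd (P (Suc j) t)\<close>] .
  finally show False using z by simp
qed

instance z2 :: idom
proof
  fix x y :: z2
  assume "x \<noteq> 0" "y \<noteq> 0"
  then obtain a x' b y' where "x = 2^a * x'" "P 1 x' = 1" "y = 2^b * y'" "P 1 y' = 1"
    using z2_decomp by meson
  then have "x * y = 2^(a+b) * (x' * y')" "P 1 (x' * y') = 1"
    by (simp_all add: P_mul power_add algebra_simps)
  then show "x * y \<noteq> 0" using z2_pow2_odd_nz by simp
qed

lemma z2_odd_unit:
  assumes "P 1 x = 1"
  shows "\<exists>w. x * (w::z2) = 1"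
proof -
  have "P 1 (x - 1) = 0" using assms by (simp add: P_diff P_1)
  then have "(2::z2) ^ 1 dvd x - 1" by (simp only: dvd_pow2_iff)
  then obtain y where y: "x = 1 + 2 * y" by (auto simp: dvd_def algebra_simps)
  define w where "w n = x ^ (2 ^ n - 1)" for n
  have c: "2 ^ Suc n dvd x ^ (2 ^ n) - 1" for n using odd_pow2_cong[OF y] .
  have xw: "x * w n = x ^ (2 ^ n)" for n
  proof -
    have e: "(2::nat) ^ n = Suc (2 ^ n - 1)" by simp
    show ?thesis by (metis power_Suc e w_def)
  qed
  have "(2::z2) ^ n dvd (w (Suc n) - w n)" for n
  proof -
    have e: "(2::nat) ^ Suc n - 1 = (2 ^ n - 1) + 2 ^ n" by simp
    have "w (Suc n) = w n * x ^ (2 ^ n)" unfolding w_def e by (simp only: power_add)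
    then have "w (Suc n) - w n = w n * (x ^ (2 ^ n) - 1)" by (simp add: algebra_simps)
    moreover have "(2::z2) ^ n dvd x ^ (2 ^ n) - 1"
      using c[of n] by (meson dvd_trans le_imp_power_dvd le_SucI order_refl)
    ultimately show ?thesis by simp
  qed
  then obtain v where v: "\<And>n. (2::z2) ^ n dvd (v - w n)" using z2_limit by blast
  have "(2::z2) ^ n dvd (x * v - 1)" for n
  proof -
    have "x * v - 1 = x * (v - w n) + (x ^ (2 ^ n) - 1)" by (simp add: xw[symmetric] algebra_simps)
    moreover have "(2::z2) ^ n dvd x ^ (2 ^ n) - 1"
      using c[of n] by (meson dvd_trans le_imp_power_dvd le_SucI order_refl)
    ultimately show ?thesis using v[of n] by (metis dvd_add dvd_mult)
  qed
  then have "x * v - 1 = 0" by (rule z2_zero_if_all_dvd)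
  then show ?thesis by auto
qed


class dpar =
  fixes dval :: "'a itself \<Rightarrow> int"
  assumes dval_in: "dval TYPE('a) \<in> {2, -2, 10, -10, -1, -5}"

typedef ('a::dpar) qo = "UNIV :: (z2 \<times> z2) set" by simp

definition q1 :: "'a::dpar qo \<Rightarrow> z2" where "q1 x = fst (Rep_qo x)"
definition q2 :: "'a::dpar qo \<Rightarrow> z2" where "q2 x = snd (Rep_qo x)"
definition mk :: "z2 \<Rightarrow> z2 \<Rightarrow> 'a::dpar qo" where "mk a b = Abs_qo (a, b)"

lemma q_mk[simp]: "q1 (mk a b) = a" "q2 (mk a b) = b"
  by (simp_all add: q1_def q2_def mk_def Abs_qo_inverse)

lemma qo_eq_iff: "x = y \<longleftrightarrow> q1 x = q1 y \<and> q2 x = q2 y"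
  by (metis Rep_qo_inject prod_eq_iff q1_def q2_def)

lemma mk_q[simp]: "mk (q1 x) (q2 x) = x"
  by (simp add: qo_eq_iff)

abbreviation DD :: "'a::dpar itself \<Rightarrow> z2" where "DD t \<equiv> of_int (dval t)"

instantiation qo :: (dpar) comm_ring_1
begin
definition zero_qo :: "'a qo" where "zero_qo = mk 0 0"
definition one_qo :: "'a qo" where "one_qo = mk 1 0"
definition plus_qo :: "'a qo \<Rightarrow> 'a qo \<Rightarrow> 'a qo" where "plus_qo x y = mk (q1 x + q1 y) (q2 x + q2 y)"
definition uminus_qo :: "'a qo \<Rightarrow> 'a qo" where "uminus_qo x = mk (- q1 x) (- q2 x)"
definition minus_qo :: "'a qo \<Rightarrow> 'a qo \<Rightarrow> 'a qo" where "minus_qo x y = mk (q1 x - q1 y) (q2 x - q2 y)"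
definition times_qo :: "'a qo \<Rightarrow> 'a qo \<Rightarrow> 'a qo" where
  "times_qo x y = mk (q1 x * q1 y + DD TYPE('a) * (q2 x * q2 y)) (q1 x * q2 y + q2 x * q1 y)"
instance
  by standard (simp_all add: qo_eq_iff zero_qo_def one_qo_def plus_qo_def uminus_qo_def minus_qo_def
      times_qo_def algebra_simps)
end

lemma q_simps[simp]:
  fixes x y :: "'a::dpar qo"
  shows
  "q1 (0::'a qo) = 0" "q2 (0::'a qo) = 0"
  "q1 (1::'a qo) = 1" "q2 (1::'a qo) = 0"
  "q1 (x + y) = q1 x + q1 y" "q2 (x + y) = q2 x + q2 y"
  "q1 (- x) = - q1 x" "q2 (- x) = - q2 x"
  "q1 (x - y) = q1 x - q1 y" "q2 (x - y) = q2 x - q2 y"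
  "q1 (x * y) = q1 x * q1 y + DD TYPE('a) * (q2 x * q2 y)"
  "q2 (x * y) = q1 x * q2 y + q2 x * q1 y"
  by (simp_all add: zero_qo_def one_qo_def plus_qo_def uminus_qo_def minus_qo_def times_qo_def)

lemma q_of_nat[simp]: "q1 (of_nat n :: 'a::dpar qo) = of_nat n" "q2 (of_nat n :: 'a qo) = 0"
  by (induction n) simp_all

lemma q_of_int[simp]: "q1 (of_int n :: 'a::dpar qo) = of_int n" "q2 (of_int n :: 'a qo) = 0"
  by (cases n rule: int_cases; simp)+

lemma q_numeral[simp]: "q1 (numeral n :: 'a::dpar qo) = numeral n" "q2 (numeral n :: 'a qo) = 0"
  using q_of_nat[of "numeral n"] by simp_all

abbreviation AQ :: "oelt \<Rightarrow> 'a::dpar qo" where "AQ \<equiv> Abs_qo"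

lemma AQ_inj: "(AQ x :: 'a::dpar qo) = AQ y \<longleftrightarrow> x = y"
  by (simp add: Abs_qo_inject)

lemma AQ_Rep: "AQ (Rep_qo X) = X" by (rule Rep_qo_inverse)

lemma q_AQ: "q1 (AQ x) = fst x" "q2 (AQ x) = snd x"
  by (simp_all add: q1_def q2_def Abs_qo_inverse)

lemma AQ_mk: "AQ (a, b) = mk a b" by (simp add: mk_def)

context
  fixes T :: "'a::dpar itself"
begin

lemma AQ_zero: "(AQ o_zero :: 'a qo) = 0"
  by (simp add: qo_eq_iff q_AQ o_zero_def z2_of_int_eq)

lemma AQ_one: "(AQ o_one :: 'a qo) = 1"
  by (simp add: qo_eq_iff q_AQ o_one_def z2_of_int_eq)

lemma AQ_add: "(AQ (o_add x y) :: 'a qo) = AQ x + AQ y"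
  by (simp add: qo_eq_iff q_AQ o_add_def z2_simps)

lemma AQ_sub: "(AQ (o_sub x y) :: 'a qo) = AQ x - AQ y"
  by (simp add: qo_eq_iff q_AQ o_sub_def z2_simps)

lemma AQ_mul: "(AQ (o_mul (dval TYPE('a)) x y) :: 'a qo) = AQ x * AQ y"
  by (simp add: qo_eq_iff q_AQ o_mul_def z2_simps z2_of_int_eq)

lemma AQ_pow: "(AQ (o_pow (dval TYPE('a)) x n) :: 'a qo) = AQ x ^ n"
  by (induction n) (simp_all add: AQ_one AQ_mul)

end

definition piq :: "'a::dpar qo" where "piq = AQ (o_pi (dval TYPE('a)))"

lemma piq_eq: "(piq :: 'a::dpar qo) = (if dval TYPE('a) \<in> {-1, -5} then mk 1 1 else mk 0 1)"
  by (simp add: piq_def o_pi_def AQ_mk z2_of_int_eq)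


lemma z2_dvd2_iff: "(2::z2) dvd z \<longleftrightarrow> P (Suc 0) z = 0"
  using dvd_pow2_iff[of 1 z] by simp

lemma P1_2w[simp]: "P (Suc 0) (2 * w) = 0"
  using z2_dvd2_iff by (metis dvd_triv_left)

lemma P1_1_2w: "P (Suc 0) (1 + 2 * w) = 1"
  by (simp add: P_add P_1)

lemma P1_of_int: "P (Suc 0) (of_int k) = k mod 2" by (simp add: P_of_int)

lemma z2_odd_unit': "P (Suc 0) x = 1 \<Longrightarrow> \<exists>w. x * (w::z2) = 1"
  using z2_odd_unit[of x] by simp

lemma z2_of_int_unit: "odd k \<Longrightarrow> \<exists>w. (of_int k :: z2) * w = 1"
  by (rule z2_odd_unit') (simp add: P1_of_int odd_iff_mod_2_eq_one)

lemma z2_of_int_nz: "(of_int k :: z2) = 0 \<Longrightarrow> k mod 32 = 0"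
  using P_of_int[of 5 k] by simp


definition nrm :: "'a::dpar qo \<Rightarrow> z2" where
  "nrm x = q1 x ^ 2 - DD TYPE('a) * q2 x ^ 2"

lemma nrm_mult: "nrm (x * y) = nrm x * nrm (y :: 'a::dpar qo)"
  by (simp add: nrm_def power2_eq_square algebra_simps)

lemma nrm_one: "nrm (1 :: 'a::dpar qo) = 1" by (simp add: nrm_def)

lemma unit_of_nrm:
  fixes x :: "'a::dpar qo"
  assumes "P (Suc 0) (nrm x) = 1"
  shows "x dvd 1"
proof -
  obtain w where w: "nrm x * w = 1" using z2_odd_unit'[OF assms] by blast
  have "x * mk (q1 x * w) (- q2 x * w) = 1"
    using w by (simp add: qo_eq_iff nrm_def power2_eq_square algebra_simps)
  then show ?thesis by (metis dvd_triv_left)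
qed

lemma D_cases: "dval TYPE('a::dpar) \<in> {-1, -5} \<or> dval TYPE('a) \<in> {2, -2, 10, -10}"
  using dval_in[where 'a='a] by auto

lemma piq_A: "dval TYPE('a::dpar) \<notin> {-1, -5} \<Longrightarrow> (piq :: 'a qo) = mk 0 1"
  by (simp add: piq_eq)

lemma piq_B: "dval TYPE('a::dpar) \<in> {-1, -5} \<Longrightarrow> (piq :: 'a qo) = mk 1 1"
  by (simp add: piq_eq)

definition hD :: "'a::dpar itself \<Rightarrow> int" where
  "hD t = (if dval t \<in> {-1, -5} then (1 - dval t) div 2 else dval t div 2)"

lemma hD_odd: "odd (hD TYPE('a::dpar))"
  using dval_in[where 'a='a] by (auto simp: hD_def)

lemma hD_A: "dval TYPE('a::dpar) \<notin> {-1, -5} \<Longrightarrow> dval TYPE('a) = 2 * hD TYPE('a)"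
  using dval_in[where 'a='a] by (auto simp: hD_def)

lemma hD_B: "dval TYPE('a::dpar) \<in> {-1, -5} \<Longrightarrow> dval TYPE('a) = 1 - 2 * hD TYPE('a)"
  using dval_in[where 'a='a] by (auto simp: hD_def)

lemma nrm_pi: "nrm (piq :: 'a::dpar qo) = 2 * of_int (if dval TYPE('a) \<in> {-1, -5} then hD TYPE('a) else - hD TYPE('a))"
proof (cases "dval TYPE('a) \<in> {-1, -5}")
  case True
  then show ?thesis unfolding piq_B[OF True] nrm_def using hD_B[OF True] by simp
next
  case False
  then show ?thesis unfolding piq_A[OF False] nrm_def using hD_A[OF False] by simp
qed

lemma pi_not_unit: "\<not> (piq :: 'a::dpar qo) dvd 1"
proof
  assume "(piq :: 'a qo) dvd 1"
  then obtain v where "piq * v = (1 :: 'a qo)" by (auto simp: dvd_def)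
  then have "nrm (piq :: 'a qo) * nrm v = 1" by (metis nrm_mult nrm_one)
  then have "P (Suc 0) (2 * (of_int (if dval TYPE('a) \<in> {-1, -5} then hD TYPE('a) else - hD TYPE('a)) * nrm v)) = P 1 1"
    by (simp add: nrm_pi mult.assoc)
  then show False by (simp only: P1_2w) (simp add: P_1)
qed

lemma pi_cancel0: "(piq :: 'a::dpar qo) * y = 0 \<Longrightarrow> y = 0"
proof (cases "dval TYPE('a) \<in> {-1, -5}")
  case True
  assume h: "(piq :: 'a qo) * y = 0"
  then have h': "(mk 1 1 :: 'a qo) * y = 0" using piq_B[OF True] by simp
  then have e1: "q1 y + DD TYPE('a) * q2 y = 0" and e2: "q1 y + q2 y = 0"
    by (simp_all add: qo_eq_iff add.commute)
  have "(DD TYPE('a) - 1) * q2 y = (q1 y + DD TYPE('a) * q2 y) - (q1 y + q2 y)"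
    by (simp add: algebra_simps)
  then have "(DD TYPE('a) - 1) * q2 y = 0" using e1 e2 by simp
  moreover have "DD TYPE('a) - 1 \<noteq> 0"
  proof
    assume "DD TYPE('a) - 1 = 0"
    then have "(of_int (dval TYPE('a) - 1) :: z2) = 0" by simp
    then show False using True z2_of_int_nz by fastforce
  qed
  ultimately have "q2 y = 0" by simp
  then show "y = 0" using e2 by (simp add: qo_eq_iff add.commute)
next
  case False
  assume h: "(piq :: 'a qo) * y = 0"
  then have h': "(mk 0 1 :: 'a qo) * y = 0" using piq_A[OF False] by simp
  then have e1: "DD TYPE('a) * q2 y = 0" and e2: "q1 y = 0"
    by (simp_all add: qo_eq_iff)
  moreover have "DD TYPE('a) \<noteq> 0"
  proof
    assume "DD TYPE('a) = 0"
    then show False using False dval_in[where 'a='a] z2_of_int_nz by fastforce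
  qed
  ultimately show "y = 0" by (simp add: qo_eq_iff)
qed

lemma pi_cancel: "(piq :: 'a::dpar qo) * x = piq * y \<Longrightarrow> x = y"
  using pi_cancel0[of "x - y"] by (simp add: algebra_simps)

lemma pi_pow_cancel: "(piq :: 'a::dpar qo) ^ k * x = piq ^ k * y \<Longrightarrow> x = y"
  by (induction k) (auto simp: mult.assoc dest: pi_cancel)

lemma pi_sq: "\<exists>e. (piq :: 'a::dpar qo) ^ 2 = 2 * e \<and> e dvd 1"
proof (cases "dval TYPE('a) \<in> {-1, -5}")
  case True
  define e :: "'a qo" where "e = mk (of_int (1 - hD TYPE('a))) 1"
  have "piq ^ 2 = 2 * e"
    unfolding piq_B[OF True] e_def qo_eq_iff power2_eq_square q_simps q_mk hD_B[OF True]
    by (simp add: algebra_simps)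
  moreover have "P (Suc 0) (nrm e) = 1"
  proof -
    obtain j where j: "hD TYPE('a) = 2 * j + 1" using hD_odd[where 'a='a] by (auto elim: oddE)
    have "nrm e = 1 + 2 * of_int (2 * j^2 + 2 * j)"
      unfolding nrm_def e_def q_mk hD_B[OF True] j by (simp add: power2_eq_square algebra_simps)
    then show ?thesis by (simp only: P1_1_2w)
  qed
  ultimately show ?thesis using unit_of_nrm by blast
next
  case False
  define e :: "'a qo" where "e = mk (of_int (hD TYPE('a))) 0"
  have "piq ^ 2 = 2 * e"
    unfolding piq_A[OF False] e_def qo_eq_iff power2_eq_square q_simps q_mk hD_A[OF False]
    by (simp add: algebra_simps)
  moreover have "P (Suc 0) (nrm e) = 1"
  proof -
    obtain j where j: "hD TYPE('a) = 2 * j + 1" using hD_odd[where 'a='a] by (auto elim: oddE)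
    have "nrm e = 1 + 2 * of_int (2 * j^2 + 2 * j)"
      unfolding nrm_def e_def q_mk j by (simp add: power2_eq_square algebra_simps)
    then show ?thesis by (simp only: P1_1_2w)
  qed
  ultimately show ?thesis using unit_of_nrm by blast
qed

lemma two_pi: "\<exists>w. (2 :: 'a::dpar qo) = piq * w"
proof -
  obtain e :: "'a qo" where e: "piq ^ 2 = 2 * e" "e dvd 1" using pi_sq by blast
  then obtain e' where "e * e' = 1" by (auto simp: dvd_def)
  then have "(2 :: 'a qo) = piq * (piq * e')" using e(1)
    by (metis mult.assoc mult.right_neutral power2_eq_square)
  then show ?thesis by blast
qed


lemma P1_range: "P (Suc 0) a = 0 \<or> P (Suc 0) a = 1"
  using P_range[of "Suc 0" a] by auto

lemma P1_sub_self: "P (Suc 0) (a - of_int (P (Suc 0) a)) = 0"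
proof -
  have "P (Suc 0) (a - of_int (P (Suc 0) a)) = (P (Suc 0) a - P (Suc 0) a mod 2) mod 2"
    by (simp add: P_diff P_of_int)
  then show ?thesis using P1_range[of a] by auto
qed

lemma z2_half: "P (Suc 0) z = 0 \<Longrightarrow> \<exists>t. z = 2 * t"
  using z2_dvd2_iff[of z] by (auto simp: dvd_def)

lemma residue: "\<exists>e y. (e = 0 \<or> e = 1) \<and> (x :: 'a::dpar qo) = of_int e + piq * y"
proof -
  obtain hi where hi: "(of_int (hD TYPE('a)) :: z2) * hi = 1"
    using z2_of_int_unit[OF hD_odd] by blast
  show ?thesis
  proof (cases "dval TYPE('a) \<in> {-1, -5}")
    case True
    define e where "e = P (Suc 0) (q1 x - q2 x)"
    have "P (Suc 0) (q2 x - q1 x + of_int e) = 0"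
    proof -
      have "P (Suc 0) (q2 x - q1 x + of_int e) = (P (Suc 0) (q2 x - q1 x) + e mod 2) mod 2"
        by (simp add: P_add P_of_int e_def)
      also have "\<dots> = ((P (Suc 0) (q2 x) - P (Suc 0) (q1 x)) mod 2 + (P (Suc 0) (q1 x) - P (Suc 0) (q2 x)) mod 2 mod 2) mod 2"
        by (simp add: P_diff e_def)
      also have "\<dots> = 0" by (simp add: mod_add_eq)
      finally show ?thesis .
    qed
    then obtain t where t: "q2 x - q1 x + of_int e = 2 * t" using z2_half by blast
    define y :: "'a qo" where "y = mk (q2 x - t * hi) (t * hi)"
    have "x = of_int e + piq * y"
      unfolding piq_B[OF True] qo_eq_iff
    proof
      have "q1 x = of_int e + (q2 x - t * hi + DD TYPE('a) * (t * hi))"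
      proof -
        have dd: "DD TYPE('a) = 1 - 2 * of_int (hD TYPE('a))" using hD_B[OF True] by simp
        have "q2 x - t * hi + DD TYPE('a) * (t * hi) = q2 x - 2 * t * (of_int (hD TYPE('a)) * hi)"
          unfolding dd by (simp add: algebra_simps)
        also have "\<dots> = q2 x - 2 * t" using hi by simp
        finally have E: "q2 x - t * hi + DD TYPE('a) * (t * hi) = q2 x - 2 * t" .
        have "of_int e + (q2 x - 2 * t) = q1 x" unfolding t[symmetric] by simp
        then show ?thesis unfolding E by (rule sym)
      qed
      then show "q1 x = q1 (of_int e + mk 1 1 * y)" by (simp add: y_def)
    next
      show "q2 x = q2 (of_int e + mk 1 1 * y)" by (simp add: y_def)
    qed
    moreover have "e = 0 \<or> e = 1" using P1_range unfolding e_def by blast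
    ultimately show ?thesis by blast
  next
    case False
    define e where "e = P (Suc 0) (q1 x)"
    obtain t where t: "q1 x - of_int e = 2 * t" using z2_half[OF P1_sub_self] unfolding e_def by blast
    define y :: "'a qo" where "y = mk (q2 x) (t * hi)"
    have "x = of_int e + piq * y"
      unfolding piq_A[OF False] qo_eq_iff
    proof
      have dd: "DD TYPE('a) = 2 * of_int (hD TYPE('a))" using hD_A[OF False] by simp
      have "DD TYPE('a) * (t * hi) = 2 * t * (of_int (hD TYPE('a)) * hi)"
        unfolding dd by (simp add: algebra_simps)
      also have "\<dots> = 2 * t" using hi by simp
      finally have "DD TYPE('a) * (t * hi) = 2 * t" .
      then show "q1 x = q1 (of_int e + mk 0 1 * y)" using t by (simp add: y_def algebra_simps)
    next
      show "q2 x = q2 (of_int e + mk 0 1 * y)" by (simp add: y_def)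
    qed
    moreover have "e = 0 \<or> e = 1" using P1_range unfolding e_def by blast
    ultimately show ?thesis by blast
  qed
qed

lemma unit_1pi: "((1 :: 'a::dpar qo) + piq * t) dvd 1"
proof (rule unit_of_nrm)
  show "P (Suc 0) (nrm (1 + piq * t)) = 1"
  proof (cases "dval TYPE('a) \<in> {-1, -5}")
    case True
    define h where "h = (of_int (hD TYPE('a)) :: z2)"
    define s where "s = q1 t + q2 t"
    have "nrm (1 + piq * t) = 1 + 2 * (s - 2 * h * q2 t * (1 + s) + 2 * h^2 * q2 t ^ 2 + h * s^2)"
      unfolding nrm_def piq_B[OF True] q_simps q_mk hD_B[OF True] s_def h_def
      by (simp add: power2_eq_square algebra_simps)
    then show ?thesis by (simp only: P1_1_2w)
  next
    case False
    define h where "h = (of_int (hD TYPE('a)) :: z2)"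
    have "nrm (1 + piq * t) = 1 + 2 * (2 * h * q2 t + 2 * h^2 * q2 t ^ 2 - h * q1 t ^ 2)"
      unfolding nrm_def piq_A[OF False] q_simps q_mk hD_A[OF False] h_def
      by (simp add: power2_eq_square algebra_simps)
    then show ?thesis by (simp only: P1_1_2w)
  qed
qed

lemma unit_iff: "(x :: 'a::dpar qo) dvd 1 \<longleftrightarrow> (\<exists>t. x = 1 + piq * t)"
proof
  assume u: "x dvd 1"
  obtain e y where e: "e = 0 \<or> e = 1" "x = of_int e + piq * y" using residue by blast
  show "\<exists>t. x = 1 + piq * t"
  proof (cases "e = 1")
    case True then show ?thesis using e by auto
  next
    case False
    then have "x = piq * y" using e by simp
    then have "piq dvd (1 :: 'a qo)" using u by (metis dvd_mult_left)
    then show ?thesis using pi_not_unit by blast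
  qed
next
  assume "\<exists>t. x = 1 + piq * t"
  then show "x dvd 1" using unit_1pi by blast
qed

lemma unit_mult: "(x :: 'a::comm_ring_1) dvd 1 \<Longrightarrow> y dvd 1 \<Longrightarrow> x * y dvd 1"
  using mult_dvd_mono[of x 1 y 1] by simp

lemma unit_pow: "(x :: 'a::comm_ring_1) dvd 1 \<Longrightarrow> x ^ n dvd 1"
  using dvd_power_same[of x 1 n] by simp

lemma pi_dvd_unit: "(piq :: 'a::dpar qo) dvd u \<Longrightarrow> \<not> u dvd 1"
  using pi_not_unit dvd_trans by metis

section \<open>Powers of 2 in O\<close>

lemma q_two_pow[simp]: "q1 ((2::'a::dpar qo) ^ n) = 2 ^ n" "q2 ((2::'a::dpar qo) ^ n) = 0"
  by (induction n) simp_all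

lemma q_two_pow_mult: "q1 ((2::'a::dpar qo) ^ n * y) = 2 ^ n * q1 y" "q2 ((2::'a::dpar qo) ^ n * y) = 2 ^ n * q2 y"
  by simp_all

lemma qdvd2: "(2::'a::dpar qo) ^ n dvd x \<longleftrightarrow> (2::z2) ^ n dvd q1 x \<and> (2::z2) ^ n dvd q2 x"
proof
  assume "(2::'a qo) ^ n dvd x"
  then obtain y where "x = 2 ^ n * y" by (auto simp: dvd_def)
  then show "(2::z2) ^ n dvd q1 x \<and> (2::z2) ^ n dvd q2 x" by (simp add: q_two_pow_mult)
next
  assume "(2::z2) ^ n dvd q1 x \<and> (2::z2) ^ n dvd q2 x"
  then obtain a b where ab: "q1 x = 2^n * a" "q2 x = 2^n * b" by (auto simp: dvd_def)
  have "x = 2 ^ n * mk a b" by (simp add: qo_eq_iff q_two_pow_mult ab)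
  then show "(2::'a qo) ^ n dvd x" by simp
qed

lemma qo_zero_if_all_dvd: "(\<And>n. (2::'a::dpar qo) ^ n dvd x) \<Longrightarrow> x = 0"
  by (simp add: qdvd2 qo_eq_iff z2_zero_if_all_dvd)

lemma qo_limit:
  assumes "\<And>n. (2::'a::dpar qo) ^ n dvd (f (Suc n) - f n)"
  shows "\<exists>y. \<forall>n. (2::'a qo) ^ n dvd (y - f n)"
proof -
  have a1: "(2::z2) ^ n dvd q1 (f (Suc n)) - q1 (f n)" for n using assms[of n] by (simp add: qdvd2)
  have a2: "(2::z2) ^ n dvd q2 (f (Suc n)) - q2 (f n)" for n using assms[of n] by (simp add: qdvd2)
  obtain y1 where y1: "\<forall>n. (2::z2) ^ n dvd (y1 - q1 (f n))"
    using z2_limit[of "\<lambda>n. q1 (f n)", OF a1] by blast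
  obtain y2 where y2: "\<forall>n. (2::z2) ^ n dvd (y2 - q2 (f n))"
    using z2_limit[of "\<lambda>n. q2 (f n)", OF a2] by blast
  have "(2::'a qo) ^ n dvd (mk y1 y2 - f n)" for n using y1 y2 by (simp add: qdvd2)
  then show ?thesis by blast
qed



section \<open>Valuation\<close>

lemma pi_pow_2n: "\<exists>e. (piq :: 'a::dpar qo) ^ (2 * n) = 2 ^ n * e"
proof -
  obtain e :: "'a qo" where "piq ^ 2 = 2 * e" using pi_sq by blast
  then have "(piq :: 'a qo) ^ (2 * n) = 2 ^ n * e ^ n"
    by (simp add: power_mult power_mult_distrib)
  then show ?thesis by blast
qed

lemma val_exists:
  assumes "(x :: 'a::dpar qo) \<noteq> 0"
  shows "\<exists>r U. U dvd 1 \<and> x = piq ^ r * U"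
proof (rule ccontr)
  assume N0: "\<not> ?thesis"
  let ?N = "\<lambda>y :: 'a qo. \<not> (\<exists>r U. U dvd 1 \<and> y = piq ^ r * U)"
  have H: "\<exists>y. x = piq ^ n * y \<and> ?N y" for n
  proof (induction n)
    case 0
    show ?case by (rule exI[of _ x]) (use N0 in simp)
  next
    case (Suc n)
    then obtain y where y: "x = piq ^ n * y" "?N y" by blast
    obtain e y' where e: "e = 0 \<or> e = 1" "y = of_int e + piq * y'" using residue by blast
    have "e \<noteq> 1"
    proof
      assume "e = 1"
      then have "y = 1 + piq * y'" using e by simp
      then have "y dvd 1" using unit_iff by blast
      then have "\<exists>r U. U dvd 1 \<and> y = piq ^ r * U" by (intro exI[of _ 0] exI[of _ y]) simp
      then show False using y(2) by contradiction
    qed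
    then have yy: "y = piq * y'" using e by simp
    have "?N y'"
    proof
      assume "\<exists>r U. U dvd 1 \<and> y' = piq ^ r * U"
      then obtain r U where "U dvd 1" "y' = piq ^ r * U" by blast
      then have "U dvd 1 \<and> y = piq ^ Suc r * U" using yy by (metis power_Suc mult.assoc)
      then show False using y(2) by blast
    qed
    moreover have "x = piq ^ Suc n * y'" using y(1) yy by (metis power_Suc mult.assoc mult.commute)
    ultimately show ?case by blast
  qed
  have "(2::'a qo) ^ n dvd x" for n
  proof -
    obtain y where y: "x = piq ^ (2 * n) * y" using H[of "2 * n"] by (elim exE conjE) (rule that)
    obtain e :: "'a qo" where e: "piq ^ (2 * n) = 2 ^ n * e" using pi_pow_2n by blast
    have "x = 2 ^ n * (e * y)" unfolding y e by (rule mult.assoc)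
    then show ?thesis by (rule dvdI)
  qed
  then have "x = 0" by (rule qo_zero_if_all_dvd)
  then show False using assms by simp
qed

lemma val_unique:
  assumes "U dvd 1" "U' dvd 1" "(piq :: 'a::dpar qo) ^ r * U = piq ^ r' * U'"
  shows "r = r' \<and> U = U'"
proof -
  have lt: False if "U dvd 1" "U' dvd 1" "(piq :: 'a qo) ^ r * U = piq ^ r' * U'" "r < r'"
    for U U' :: "'a qo" and r r'
  proof -
    have "r' = r + (r' - r)" using that(4) by simp
    then have "(piq :: 'a qo) ^ r' = piq ^ r * piq ^ (r' - r)" by (metis power_add)
    then have "piq ^ r * U = piq ^ r * (piq ^ (r' - r) * U')" using that(3) by (simp add: mult.assoc)
    then have "U = piq ^ (r' - r) * U'" by (rule pi_pow_cancel)
    moreover have "r' - r = Suc (r' - r - 1)" using that(4) by simp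
    ultimately have "U = piq * (piq ^ (r' - r - 1) * U')" by (metis power_Suc mult.assoc)
    then have "piq dvd U" by (metis dvd_triv_left)
    then show False using pi_dvd_unit that(1) by blast
  qed
  have "r = r'"
    using lt[OF assms] lt[OF assms(2,1) assms(3)[symmetric]] by (meson linorder_neqE_nat)
  then show ?thesis using assms(3) pi_pow_cancel by blast
qed


lemma binom1: "\<exists>z. ((Y :: 'b::comm_ring_1) + h) ^ n = Y ^ n + of_nat n * Y ^ (n - 1) * h + h ^ 2 * z"
proof (induction n)
  case 0 then show ?case by (intro exI[of _ 0]) simp
next
  case (Suc n)
  then obtain z where z: "(Y + h) ^ n = Y ^ n + of_nat n * Y ^ (n - 1) * h + h ^ 2 * z" by blast
  show ?case
  proof (cases n)
    case 0 then show ?thesis by (intro exI[of _ 0]) simp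
  next
    case (Suc n')
    have "(Y + h) ^ Suc n = (Y ^ n + of_nat n * Y ^ (n - 1) * h + h ^ 2 * z) * (Y + h)"
      using z by simp
    also have "\<dots> = Y ^ n * Y + of_nat n * (Y ^ n' * Y) * h + Y ^ n * h + h ^ 2 * (of_nat n * Y ^ n' + z * (Y + h))"
      using Suc by (simp add: power2_eq_square algebra_simps)
    also have "\<dots> = Y ^ Suc n + of_nat (Suc n) * Y ^ (Suc n - 1) * h + h ^ 2 * (of_nat n * Y ^ n' + z * (Y + h))"
      using Suc by (simp add: algebra_simps)
    finally show ?thesis by blast
  qed
qed

lemma diff_dvd_pow_diff: "(x :: 'b::comm_ring_1) - y dvd x ^ n - y ^ n"
proof (induction n)
  case 0 then show ?case by simp
next
  case (Suc n)
  have "x ^ Suc n - y ^ Suc n = x * (x ^ n - y ^ n) + (x - y) * y ^ n" by (simp add: algebra_simps)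
  then show ?case using Suc by (simp add: dvd_add dvd_mult)
qed

lemma unit_sq: "(v :: 'a::dpar qo) dvd 1 \<Longrightarrow> \<exists>r. v ^ 2 = 1 + 2 * r"
proof -
  assume "v dvd 1"
  then obtain t where t: "v = 1 + piq * t" using unit_iff by blast
  obtain e :: "'a qo" where e: "piq ^ 2 = 2 * e" using pi_sq by blast
  have "v ^ 2 = 1 + 2 * (piq * t) + piq ^ 2 * t ^ 2" unfolding t by (simp add: power2_eq_square algebra_simps)
  also have "\<dots> = 1 + 2 * (piq * t + e * t ^ 2)" unfolding e by (simp add: algebra_simps)
  finally show ?thesis by blast
qed

lemma odd_nat_unit: "odd m \<Longrightarrow> (of_nat m :: 'a::dpar qo) dvd 1"
proof -
  assume "odd m"
  then obtain j where j: "m = 2 * j + 1" by (auto elim: oddE)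
  obtain w :: "'a qo" where w: "2 = piq * w" using two_pi by blast
  have "(of_nat m :: 'a qo) = 1 + 2 * of_nat j" by (simp add: j)
  also have "\<dots> = 1 + piq * (w * of_nat j)" by (simp add: w mult.assoc)
  finally show ?thesis using unit_1pi by metis
qed

lemma hensel_lift:
  fixes c u Y :: "'a::dpar qo"
  assumes k: "k \<ge> 2" and u: "u dvd 1" and Y: "Y dvd 1"
    and g: "2 ^ (k + 1) dvd c + u * Y ^ d" and d: "d = 2 * m" and m: "odd m"
  shows "\<exists>Y'. Y' dvd 1 \<and> 2 ^ k dvd Y' - Y \<and> 2 ^ (k + 2) dvd c + u * Y' ^ d"
proof -
  obtain w where w: "c + u * Y ^ d = 2 ^ (k + 1) * w" using g by (auto simp: dvd_def)
  define v where "v = u * of_nat m * Y ^ (d - 1)"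
  have vu: "v dvd 1" unfolding v_def using u Y m by (simp add: unit_mult unit_pow odd_nat_unit)
  obtain r where r: "v ^ 2 = 1 + 2 * r" using unit_sq[OF vu] by blast
  define e where "e = - (w * v)"
  define h where "h = 2 ^ k * e"
  obtain z where z: "(Y + h) ^ d = Y ^ d + of_nat d * Y ^ (d - 1) * h + h ^ 2 * z"
    using binom1 by blast
  have S2: "c + u * (Y + h) ^ d = (c + u * Y ^ d) + u * of_nat d * Y ^ (d - 1) * h + u * h ^ 2 * z"
    unfolding z by (simp add: algebra_simps)
  have S3: "u * of_nat d * Y ^ (d - 1) * h = 2 ^ (k + 1) * (v * e)"
    unfolding h_def v_def d by (simp add: algebra_simps)
  have kk: "(2::'a qo) ^ (2 * k) = 2 ^ (k + 2) * 2 ^ (k - 2)"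
  proof -
    have "2 * k = (k + 2) + (k - 2)" using k by simp
    then show ?thesis by (metis power_add)
  qed
  have S4: "u * h ^ 2 * z = 2 ^ (k + 2) * (2 ^ (k - 2) * (u * e ^ 2 * z))"
  proof -
    have "u * h ^ 2 * z = 2 ^ (2 * k) * (u * e ^ 2 * z)"
      unfolding h_def by (simp add: power_mult_distrib power_mult[symmetric] algebra_simps)
    then show ?thesis unfolding kk by (simp add: algebra_simps)
  qed
  have S5: "2 ^ (k + 1) * w + 2 ^ (k + 1) * (v * e) = (2::'a qo) ^ (k + 2) * (- (r * w))"
  proof -
    have "2 ^ (k + 1) * w + 2 ^ (k + 1) * (v * e) = 2 ^ (k + 1) * (w - v ^ 2 * w)"
      unfolding e_def by (simp add: power2_eq_square algebra_simps)
    also have "\<dots> = 2 ^ (k + 1) * (- (2 * (r * w)))" unfolding r by (simp add: algebra_simps)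
    also have "\<dots> = (2::'a qo) ^ (k + 2) * (- (r * w))" by (simp add: algebra_simps)
    finally show ?thesis .
  qed
  have "c + u * (Y + h) ^ d = (2 ^ (k + 1) * w + 2 ^ (k + 1) * (v * e)) + 2 ^ (k + 2) * (2 ^ (k - 2) * (u * e ^ 2 * z))"
    unfolding S2 w S3 S4 by simp
  also have "\<dots> = 2 ^ (k + 2) * (- (r * w)) + 2 ^ (k + 2) * (2 ^ (k - 2) * (u * e ^ 2 * z))"
    unfolding S5 ..
  also have "\<dots> = 2 ^ (k + 2) * (- (r * w) + 2 ^ (k - 2) * (u * e ^ 2 * z))"
    by (simp only: distrib_left)
  finally have "c + u * (Y + h) ^ d = 2 ^ (k + 2) * (- (r * w) + 2 ^ (k - 2) * (u * e ^ 2 * z))" .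
  then have G: "2 ^ (k + 2) dvd c + u * (Y + h) ^ d" by (metis dvd_triv_left)
  have H: "2 ^ k dvd (Y + h) - Y" unfolding h_def by simp
  have U: "(Y + h) dvd 1"
  proof -
    obtain t where t: "Y = 1 + piq * t" using Y unit_iff by blast
    obtain w2 :: "'a qo" where w2: "2 = piq * w2" using two_pi by blast
    have "(2::'a qo) ^ k = 2 * 2 ^ (k - 1)" using k by (simp add: power_Suc[symmetric])
    then have "h = piq * (w2 * 2 ^ (k - 1) * e)" unfolding h_def w2 by (simp add: mult.assoc)
    then have "Y + h = 1 + piq * (t + w2 * 2 ^ (k - 1) * e)" unfolding t by (simp add: algebra_simps)
    then show ?thesis using unit_1pi by metis
  qed
  show ?thesis using G H U by blast
qed

lemma hensel:
  fixes c u Y0 :: "'a::dpar qo"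
  assumes u: "u dvd 1" and Y0: "Y0 dvd 1" and g: "2 ^ 3 dvd c + u * Y0 ^ d"
    and d: "d = 2 * m" and m: "odd m"
  shows "\<exists>Y. c + u * Y ^ d = 0"
proof -
  let ?P = "\<lambda>n Yn Y'. Y' dvd 1 \<and> 2 ^ (n + 2) dvd Y' - Yn \<and> 2 ^ (n + 4) dvd c + u * Y' ^ d"
  define Ys where "Ys = rec_nat Y0 (\<lambda>n Yn. SOME Y'. ?P n Yn Y')"
  have Ys0: "Ys 0 = Y0" by (simp add: Ys_def)
  have YsS: "Ys (Suc n) = (SOME Y'. ?P n (Ys n) Y')" for n by (simp add: Ys_def)
  have inv: "Ys n dvd 1 \<and> 2 ^ (n + 3) dvd c + u * Ys n ^ d" for n
  proof (induction n)
    case 0 then show ?case using Y0 g Ys0 by simp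
  next
    case (Suc n)
    have e1: "n + 2 + 1 = n + 3" and e2: "n + 2 + 2 = n + 4" by simp_all
    have "\<exists>Y'. ?P n (Ys n) Y'"
      by (rule hensel_lift[of "n + 2" u "Ys n" c d m, unfolded e1 e2]) (use Suc u d m in simp_all)
    then have "?P n (Ys n) (Ys (Suc n))" unfolding YsS by (rule someI_ex)
    moreover have e3: "Suc n + 3 = n + 4" by simp
    ultimately show ?case unfolding e3 by blast
  qed
  have step: "(2::'a qo) ^ n dvd Ys (Suc n) - Ys n" for n
  proof -
    have e1: "n + 2 + 1 = n + 3" and e2: "n + 2 + 2 = n + 4" by simp_all
    have "\<exists>Y'. ?P n (Ys n) Y'"
      by (rule hensel_lift[of "n + 2" u "Ys n" c d m, unfolded e1 e2]) (use inv[of n] u d m in simp_all)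
    then have "?P n (Ys n) (Ys (Suc n))" unfolding YsS by (rule someI_ex)
    then have "2 ^ (n + 2) dvd Ys (Suc n) - Ys n" by blast
    moreover have "(2::'a qo) ^ n dvd 2 ^ (n + 2)" by (simp add: le_imp_power_dvd)
    ultimately show ?thesis using dvd_trans by blast
  qed
  obtain Y where Y: "\<And>n. (2::'a qo) ^ n dvd Y - Ys n" using qo_limit[of Ys, OF step] by blast
  have "(2::'a qo) ^ n dvd c + u * Y ^ d" for n
  proof -
    have e: "c + u * Y ^ d = (c + u * Ys n ^ d) + u * (Y ^ d - Ys n ^ d)" by (simp add: algebra_simps)
    have "(2::'a qo) ^ n dvd 2 ^ (n + 3)" by (simp add: le_imp_power_dvd)
    then have a: "(2::'a qo) ^ n dvd c + u * Ys n ^ d" using inv[of n] dvd_trans by blast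
    have "(2::'a qo) ^ n dvd Y ^ d - Ys n ^ d" using Y[of n] diff_dvd_pow_diff dvd_trans by blast
    then have b: "(2::'a qo) ^ n dvd u * (Y ^ d - Ys n ^ d)" by (simp add: dvd_mult)
    show ?thesis unfolding e using a b by (rule dvd_add)
  qed
  then have "c + u * Y ^ d = 0" by (rule qo_zero_if_all_dvd)
  then show ?thesis by blast
qed


definition pm :: "int \<Rightarrow> int\<times>int \<Rightarrow> int\<times>int \<Rightarrow> int\<times>int" where
 "pm D x y = ((fst x * fst y + D * (snd x * snd y)) mod 8, (fst x * snd y + snd x * fst y) mod 8)"
definition pa :: "int\<times>int \<Rightarrow> int\<times>int \<Rightarrow> int\<times>int" where
 "pa x y = ((fst x + fst y) mod 8, (snd x + snd y) mod 8)"
definition els :: "(int\<times>int) list" where "els = List.product [0..7] [0..7]"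
definition pp :: "int \<Rightarrow> int\<times>int" where "pp D = (if D \<in> {-1,-5} then (1,1) else (0,1))"
definition reps :: "int \<Rightarrow> (int\<times>int) list" where
 "reps D = [(1,0), pa (1,0) (pp D), pa (1,0) (pm D (2,0) (pp D)), pm D (pa (1,0) (pp D)) (pa (1,0) (pm D (2,0) (pp D)))]"
definition ucond :: "int \<Rightarrow> int\<times>int \<Rightarrow> bool" where
 "ucond D u = (if D \<in> {-1,-5} then odd (fst u + snd u) else odd (fst u))"
definition CC :: "int \<Rightarrow> int \<Rightarrow> int\<times>int" where
 "CC D a = pa (pm D (pp D) (pp D)) (pm D (a,0) (pm D (pm D (pp D) (pp D)) (pp D)))"
definition NN :: "int\<times>int \<Rightarrow> int\<times>int" where "NN x = ((- fst x) mod 8, (- snd x) mod 8)"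
definition hit :: "int \<Rightarrow> (int\<times>int) list \<Rightarrow> int\<times>int \<Rightarrow> int\<times>int \<Rightarrow> int\<times>int \<Rightarrow> bool" where
 "hit D S u v c = list_ex (\<lambda>x. list_ex (\<lambda>y. pa (pm D u x) (pm D v y) = c) S) S"
definition chk :: "int \<Rightarrow> (int\<times>int) list \<Rightarrow> (int\<times>int) list \<Rightarrow> bool" where
 "chk D S C = list_all (\<lambda>u. list_all (\<lambda>v. \<not> ucond D u \<or> odd (fst u - fst v) \<or> odd (snd u - snd v) \<or>
     list_ex (\<lambda>c. hit D S u v c \<and> hit D S u v (NN c)) C) els) els"
fun ppw :: "int \<Rightarrow> int\<times>int \<Rightarrow> nat \<Rightarrow> int\<times>int" where
  "ppw D x 0 = (1, 0)"
| "ppw D x (Suc n) = pm D (ppw D x n) x"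

definition fin_ok :: "int \<Rightarrow> bool" where
  "fin_ok D = (chk D (map (\<lambda>x. pm D x x) (reps D)) (map (CC D) [0, 1]) \<and>
     list_all (\<lambda>x. ppw D x 8 = (1, 0)) (reps D) \<and>
     list_all (\<lambda>t. ucond D (pa (1,0) (pm D (pp D) t))) els)"

lemma fin_2: "fin_ok 2" by code_simp
lemma fin_m2: "fin_ok (-2)" by code_simp
lemma fin_10: "fin_ok 10" by code_simp
lemma fin_m10: "fin_ok (-10)" by code_simp
lemma fin_m1: "fin_ok (-1)" by code_simp
lemma fin_m5: "fin_ok (-5)" by code_simp

lemma fin_all: "D \<in> {2, -2, 10, -10, -1, -5} \<Longrightarrow> fin_ok D"
  using fin_2 fin_m2 fin_10 fin_m10 fin_m1 fin_m5 by auto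


definition pj :: "'a::dpar qo \<Rightarrow> int \<times> int" where
  "pj x = (P 3 (q1 x), P 3 (q2 x))"

lemma pow23: "(2::int) ^ 3 = 8" by simp

lemma pj_add: "pj (x + y) = pa (pj x) (pj y)"
  by (simp add: pj_def pa_def P_add)

lemma pj_mul: "pj (x * y) = pm (dval TYPE('a)) (pj x) (pj (y :: 'a::dpar qo))"
proof -
  have a: "P 3 (q1 (x * y)) = (P 3 (q1 x) * P 3 (q1 y) + dval TYPE('a) * (P 3 (q2 x) * P 3 (q2 y))) mod 8"
    by (simp only: q_simps P_add P_mul P_of_int pow23 mod_mult_eq mod_add_eq)
  have b: "P 3 (q2 (x * y)) = (P 3 (q1 x) * P 3 (q2 y) + P 3 (q2 x) * P 3 (q1 y)) mod 8"
    by (simp only: q_simps P_add P_mul pow23 mod_mult_eq mod_add_eq)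
  show ?thesis using a b by (simp add: pj_def pm_def)
qed

lemma pj_one: "pj (1 :: 'a::dpar qo) = (1, 0)"
  by (simp add: pj_def P_1)

lemma pj_two: "pj (2 :: 'a::dpar qo) = (2, 0)"
  using P_of_nat[of 3 2] by (simp add: pj_def)

lemma pj_piq: "pj (piq :: 'a::dpar qo) = pp (dval TYPE('a))"
  by (simp add: piq_eq pj_def pp_def P_1)

lemma pj_els: "pj x \<in> set els"
  using P_range[of 3 "q1 x"] P_range[of 3 "q2 x"] by (auto simp: pj_def els_def)

lemma pj_eq_iff: "pj x = pj y \<longleftrightarrow> (2::'a::dpar qo) ^ 3 dvd (x - y)"
proof
  assume "pj x = pj y"
  then have "P 3 (q1 x) = P 3 (q1 y)" "P 3 (q2 x) = P 3 (q2 y)" by (simp_all add: pj_def)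
  then show "(2::'a::dpar qo) ^ 3 dvd (x - y)" unfolding qdvd2 dvd_pow2_iff P_diff q_simps by simp
next
  assume "(2::'a::dpar qo) ^ 3 dvd (x - y)"
  then have "(2::z2) ^ 3 dvd q1 x - q1 y" "(2::z2) ^ 3 dvd q2 x - q2 y" unfolding qdvd2 q_simps by simp_all
  then show "pj x = pj y" by (simp add: pj_def P_eq_if_dvd)
qed

lemma pj_pow: "pj (x ^ n) = ppw (dval TYPE('a)) (pj x) n" for x :: "'a::dpar qo"
  by (induction n) (simp_all add: pj_one pj_mul power_Suc2 del: power_Suc)

definition RR :: "'a::dpar qo list" where
  "RR = [1, 1 + piq, 1 + 2 * piq, (1 + piq) * (1 + 2 * piq)]"

lemma RR_pj: "map pj (RR :: 'a::dpar qo list) = reps (dval TYPE('a))"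
  by (simp add: RR_def reps_def pj_add pj_mul pj_one pj_two pj_piq)

lemma RR_unit: "X \<in> set (RR :: 'a::dpar qo list) \<Longrightarrow> X dvd 1"
proof -
  have a: "(1 + piq :: 'a qo) dvd 1" using unit_1pi[of 1] by simp
  have b: "(1 + 2 * piq :: 'a qo) dvd 1" using unit_1pi[of 2] by (simp add: mult.commute)
  assume "X \<in> set (RR :: 'a qo list)"
  then show ?thesis using a b unit_mult[OF a b] by (auto simp: RR_def)
qed

lemma RR_pow8: "X \<in> set (RR :: 'a::dpar qo list) \<Longrightarrow> (2::'a qo) ^ 3 dvd X ^ 8 - 1"
proof -
  assume X: "X \<in> set (RR :: 'a qo list)"
  have "fin_ok (dval TYPE('a))" using fin_all dval_in by blast
  then have "list_all (\<lambda>x. ppw (dval TYPE('a)) x 8 = (1, 0)) (reps (dval TYPE('a)))"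
    by (simp add: fin_ok_def)
  moreover have "pj X \<in> set (reps (dval TYPE('a)))"
    using X RR_pj[where 'a='a] by (metis image_eqI list.set_map)
  ultimately have "ppw (dval TYPE('a)) (pj X) 8 = (1, 0)"
    by (simp add: list_all_iff)
  then have "pj (X ^ 8) = pj (1 :: 'a qo)" by (simp add: pj_pow pj_one)
  then show ?thesis by (simp add: pj_eq_iff)
qed

lemma pow_cong1: "(M :: 'b::comm_ring_1) dvd a - 1 \<Longrightarrow> M dvd a ^ j - 1"
  using diff_dvd_pow_diff[of a 1 j] dvd_trans by fastforce

lemma Z_of_X:
  assumes X: "X \<in> set (RR :: 'a::dpar qo list)" and d: "d = 2 * m" and m: "odd m"
  shows "(if m mod 4 = 1 then X else X ^ 3) dvd 1 \<and>
         (2::'a qo) ^ 3 dvd (if m mod 4 = 1 then X else X ^ 3) ^ d - X ^ 2"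
proof -
  have u: "X dvd 1" using RR_unit[OF X] .
  have p8: "(2::'a qo) ^ 3 dvd X ^ 8 - 1" using RR_pow8[OF X] .
  have key: "(2::'a qo) ^ 3 dvd X ^ (8 * j + 2) - X ^ 2" for j
  proof -
    have "(2::'a qo) ^ 3 dvd (X ^ 8) ^ j - 1" using pow_cong1[OF p8] .
    then have "(2::'a qo) ^ 3 dvd ((X ^ 8) ^ j - 1) * X ^ 2" by (rule dvd_mult2)
    moreover have "X ^ (8 * j + 2) = (X ^ 8) ^ j * X ^ 2" by (simp only: power_add power_mult)
    then have "((X ^ 8) ^ j - 1) * X ^ 2 = X ^ (8 * j + 2) - X ^ 2"
      by (simp add: algebra_simps)
    ultimately show ?thesis by simp
  qed
  show ?thesis
  proof (cases "m mod 4 = 1")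
    case True
    then obtain j where "m = 4 * j + 1" by (metis div_mult_mod_eq mult.commute)
    then have "d = 8 * j + 2" using d by simp
    then show ?thesis using True u key by simp
  next
    case False
    then have "m mod 4 = 3" using m by presburger
    then obtain j where "m = 4 * j + 3" by (metis div_mult_mod_eq mult.commute)
    then have "3 * d = 8 * (3 * j + 2) + 2" using d by simp
    then have "(X ^ 3) ^ d = X ^ (8 * (3 * j + 2) + 2)" by (metis power_mult)
    then show ?thesis using False u key[of "3 * j + 2"] by (simp add: unit_pow)
  qed
qed


lemma pj_zero: "pj (0 :: 'a::dpar qo) = (0, 0)" by (simp add: pj_def)

lemma pa_NN: "pa c (NN c) = (0, 0)"
  by (simp add: pa_def NN_def mod_add_right_eq)

lemma pj_par:
  assumes "2 dvd (u - v :: 'a::dpar qo)"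
  shows "even (fst (pj u) - fst (pj v)) \<and> even (snd (pj u) - snd (pj v))"
proof -
  have "(2::'a qo) ^ 1 dvd u - v" using assms by simp
  then have "(2::z2) ^ 1 dvd q1 u - q1 v" "(2::z2) ^ 1 dvd q2 u - q2 v"
    unfolding qdvd2 q_simps by simp_all
  then have e: "P 1 (q1 u) = P 1 (q1 v)" "P 1 (q2 u) = P 1 (q2 v)" by (simp_all only: P_eq_if_dvd)
  have m: "P 3 a mod 2 = P 1 a" for a using P_mod[of 1 3 a] by simp
  have "P 3 (q1 u) mod 2 = P 3 (q1 v) mod 2" "P 3 (q2 u) mod 2 = P 3 (q2 v) mod 2"
    using e m by simp_all
  then show ?thesis by (simp add: pj_def even_iff_mod_2_eq_zero mod_diff_eq[symmetric])
qed

lemma hit_qo: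
  fixes u v :: "'a::dpar qo"
  assumes "hit (dval TYPE('a)) (map (\<lambda>x. pm (dval TYPE('a)) x x) (reps (dval TYPE('a)))) (pj u) (pj v) c"
  shows "\<exists>X\<in>set (RR :: 'a qo list). \<exists>Y\<in>set (RR :: 'a qo list). pj (u * X ^ 2 + v * Y ^ 2) = c"
proof -
  have S: "map (\<lambda>x. pm (dval TYPE('a)) x x) (reps (dval TYPE('a))) = map (\<lambda>X. pj (X ^ 2)) (RR :: 'a qo list)"
    by (simp add: RR_pj[symmetric] pj_mul power2_eq_square)
  obtain X Y where X: "X \<in> set (RR :: 'a qo list)" and Y: "Y \<in> set (RR :: 'a qo list)"
    and e: "pa (pm (dval TYPE('a)) (pj u) (pj (X ^ 2))) (pm (dval TYPE('a)) (pj v) (pj (Y ^ 2))) = c"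
    using assms unfolding S hit_def list_ex_iff by auto
  have "pj (u * X ^ 2 + v * Y ^ 2) = c" using e by (simp add: pj_add pj_mul)
  then show ?thesis using X Y by blast
qed

lemma pair_hit:
  fixes u v :: "'a::dpar qo"
  assumes u: "u dvd 1" and v: "v dvd 1" and uv: "2 dvd u - v"
  shows "\<exists>j::int. (j = 0 \<or> j = 1) \<and> (\<exists>X\<in>set (RR :: 'a qo list). \<exists>Y\<in>set (RR :: 'a qo list). pj (u * X ^ 2 + v * Y ^ 2) = CC (dval TYPE('a)) j)
     \<and> (\<exists>X\<in>set (RR :: 'a qo list). \<exists>Y\<in>set (RR :: 'a qo list). pj (u * X ^ 2 + v * Y ^ 2) = NN (CC (dval TYPE('a)) j))"
proof -
  let ?D = "dval TYPE('a)"
  let ?S = "map (\<lambda>x. pm ?D x x) (reps ?D)"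
  have fo: "fin_ok ?D" using fin_all dval_in by blast
  then have ch: "chk ?D ?S (map (CC ?D) [0, 1])" by (simp add: fin_ok_def)
  from u[unfolded unit_iff] obtain t where t: "u = 1 + piq * t" ..
  have "list_all (\<lambda>t. ucond ?D (pa (1,0) (pm ?D (pp ?D) t))) els" using fo by (simp add: fin_ok_def)
  then have "ucond ?D (pa (1,0) (pm ?D (pp ?D) (pj t)))" using pj_els[of t] by (simp add: list_all_iff)
  then have uc: "ucond ?D (pj u)" unfolding t by (simp add: pj_add pj_mul pj_one pj_piq)
  have par: "even (fst (pj u) - fst (pj v)) \<and> even (snd (pj u) - snd (pj v))" using pj_par[OF uv] .
  have all: "\<forall>a\<in>set els. \<forall>b\<in>set els. \<not> ucond ?D a \<or> odd (fst a - fst b) \<or> odd (snd a - snd b) \<or>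
     list_ex (\<lambda>c. hit ?D ?S a b c \<and> hit ?D ?S a b (NN c)) (map (CC ?D) [0, 1])"
    using ch unfolding chk_def by (simp only: list_all_iff)
  have "\<not> ucond ?D (pj u) \<or> odd (fst (pj u) - fst (pj v)) \<or> odd (snd (pj u) - snd (pj v)) \<or>
     list_ex (\<lambda>c. hit ?D ?S (pj u) (pj v) c \<and> hit ?D ?S (pj u) (pj v) (NN c)) (map (CC ?D) [0, 1])"
    using bspec[OF bspec[OF all pj_els[of u]] pj_els[of v]] .
  moreover have "\<not> odd (fst (pj u) - fst (pj v))" "\<not> odd (snd (pj u) - snd (pj v))" using par by simp_all
  ultimately have "list_ex (\<lambda>c. hit ?D ?S (pj u) (pj v) c \<and> hit ?D ?S (pj u) (pj v) (NN c)) (map (CC ?D) [0, 1])"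
    using uc by (elim disjE) simp_all
  then obtain j where j01: "j = 0 \<or> j = 1" and h1: "hit ?D ?S (pj u) (pj v) (CC ?D j)"
     and h2: "hit ?D ?S (pj u) (pj v) (NN (CC ?D j))"
    by auto
  show ?thesis
    apply (intro exI[of _ j] conjI)
      apply (fact j01)
     apply (rule hit_qo[OF h1])
    apply (rule hit_qo[OF h2])
    done
qed

lemma mod8_core:
  fixes U :: "nat \<Rightarrow> 'a::dpar qo"
  assumes units: "\<And>k. k < 6 \<Longrightarrow> U k dvd 1"
    and pairs: "\<And>k. k < 3 \<Longrightarrow> 2 dvd U (2 * k) - U (2 * k + 1)"
    and d: "d = 2 * m" and m: "odd m"
  shows "\<exists>k1 k2 Z1 Z2 Z3 Z4. k1 < 3 \<and> k2 < 3 \<and> k1 \<noteq> k2 \<and>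
     Z1 dvd 1 \<and> Z2 dvd 1 \<and> Z3 dvd 1 \<and> Z4 dvd 1 \<and>
     (2::'a qo) ^ 3 dvd U (2 * k1) * Z1 ^ d + U (2 * k1 + 1) * Z2 ^ d + U (2 * k2) * Z3 ^ d + U (2 * k2 + 1) * Z4 ^ d"
proof -
  let ?D = "dval TYPE('a)"
  let ?Q = "\<lambda>k j. (\<exists>X\<in>set (RR :: 'a qo list). \<exists>Y\<in>set (RR :: 'a qo list). pj (U (2 * k) * X ^ 2 + U (2 * k + 1) * Y ^ 2) = CC ?D j)
     \<and> (\<exists>X\<in>set (RR :: 'a qo list). \<exists>Y\<in>set (RR :: 'a qo list). pj (U (2 * k) * X ^ 2 + U (2 * k + 1) * Y ^ 2) = NN (CC ?D j))"
  have "\<forall>k. \<exists>j::int. k < 3 \<longrightarrow> (j = 0 \<or> j = 1) \<and> ?Q k j"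
  proof
    fix k :: nat
    show "\<exists>j::int. k < 3 \<longrightarrow> (j = 0 \<or> j = 1) \<and> ?Q k j"
    proof (cases "k < 3")
      case True
      have k6: "2 * k < 6" "2 * k + 1 < 6" using True by simp_all
      from pair_hit[OF units[OF k6(1)] units[OF k6(2)] pairs[OF True]]
      obtain j where "(j = 0 \<or> j = 1) \<and> ?Q k j" ..
      then show ?thesis by blast
    next
      case False then show ?thesis by simp
    qed
  qed
  from choice[OF this] obtain J where J0: "\<forall>k. k < 3 \<longrightarrow> (J k = 0 \<or> J k = 1) \<and> ?Q k (J k)"
    by (elim exE) (erule that)
  have J: "(J k = 0 \<or> J k = 1) \<and> ?Q k (J k)" if "k < 3" for k using J0 that by simp
  obtain k1 k2 where kk: "k1 < 3" "k2 < 3" "k1 \<noteq> k2" "J k1 = J k2"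
  proof -
    have "J 0 = 0 \<or> J 0 = 1" "J 1 = 0 \<or> J 1 = 1" "J 2 = 0 \<or> J 2 = 1" using J by simp_all
    then have c: "J 0 = J 1 \<or> J 0 = J 2 \<or> J 1 = J 2" by auto
    show ?thesis
    proof (cases "J 0 = J 1")
      case True then show ?thesis using that[of 0 1] by simp
    next
      case False
      show ?thesis
      proof (cases "J 0 = J 2")
        case True then show ?thesis using that[of 0 2] by simp
      next
        case False
        then have "J 1 = J 2" using c \<open>J 0 \<noteq> J 1\<close> by blast
        then show ?thesis using that[of 1 2] by simp
      qed
    qed
  qed
  define c where "c = CC ?D (J k1)"
  obtain X1 X2 where X12: "X1 \<in> set (RR :: 'a qo list)" "X2 \<in> set (RR :: 'a qo list)"
    "pj (U (2 * k1) * X1 ^ 2 + U (2 * k1 + 1) * X2 ^ 2) = c"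
    using J[OF kk(1)] unfolding c_def by blast
  obtain X3 X4 where X34: "X3 \<in> set (RR :: 'a qo list)" "X4 \<in> set (RR :: 'a qo list)"
    "pj (U (2 * k2) * X3 ^ 2 + U (2 * k2 + 1) * X4 ^ 2) = NN c"
    using J[OF kk(2)] unfolding c_def kk(4) by blast
  define S where "S = (U (2 * k1) * X1 ^ 2 + U (2 * k1 + 1) * X2 ^ 2) + (U (2 * k2) * X3 ^ 2 + U (2 * k2 + 1) * X4 ^ 2)"
  have "pj S = pa (pj (U (2 * k1) * X1 ^ 2 + U (2 * k1 + 1) * X2 ^ 2)) (pj (U (2 * k2) * X3 ^ 2 + U (2 * k2 + 1) * X4 ^ 2))"
    unfolding S_def by (rule pj_add)
  also have "\<dots> = pj (0 :: 'a qo)" unfolding X12(3) X34(3) pa_NN pj_zero ..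
  finally have "pj S = pj (0 :: 'a qo)" .
  then have S8: "(2::'a qo) ^ 3 dvd S" by (simp add: pj_eq_iff)
  define Zf where "Zf X = (if m mod 4 = 1 then X else X ^ 3)" for X :: "'a qo"
  have Z: "Zf X dvd 1 \<and> (2::'a qo) ^ 3 dvd Zf X ^ d - X ^ 2" if "X \<in> set (RR :: 'a qo list)" for X
    unfolding Zf_def using Z_of_X[OF that d m] .
  define S' where "S' = U (2 * k1) * Zf X1 ^ d + U (2 * k1 + 1) * Zf X2 ^ d + U (2 * k2) * Zf X3 ^ d + U (2 * k2 + 1) * Zf X4 ^ d"
  have "S' = S + (U (2 * k1) * (Zf X1 ^ d - X1 ^ 2) + U (2 * k1 + 1) * (Zf X2 ^ d - X2 ^ 2)
                + U (2 * k2) * (Zf X3 ^ d - X3 ^ 2) + U (2 * k2 + 1) * (Zf X4 ^ d - X4 ^ 2))"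
    unfolding S_def S'_def by (simp add: algebra_simps)
  moreover have "(2::'a qo) ^ 3 dvd U (2 * k1) * (Zf X1 ^ d - X1 ^ 2) + U (2 * k1 + 1) * (Zf X2 ^ d - X2 ^ 2)
                + U (2 * k2) * (Zf X3 ^ d - X3 ^ 2) + U (2 * k2 + 1) * (Zf X4 ^ d - X4 ^ 2)"
    using Z[OF X12(1)] Z[OF X12(2)] Z[OF X34(1)] Z[OF X34(2)] by (simp add: dvd_add dvd_mult)
  ultimately have "(2::'a qo) ^ 3 dvd S'" using S8 by (simp add: dvd_add)
  then show ?thesis unfolding S'_def using kk Z[OF X12(1)] Z[OF X12(2)] Z[OF X34(1)] Z[OF X34(2)] by blast
qed



lemma term_eq:
  assumes "r + t * d = R"
  shows "((piq :: 'a::dpar qo) ^ r * U) * (piq ^ t * V) ^ d = piq ^ R * (U * V ^ d)"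
proof -
  have "(piq ^ t * V) ^ d = (piq :: 'a qo) ^ (t * d) * V ^ d" by (simp add: power_mult_distrib power_mult)
  then have "((piq :: 'a qo) ^ r * U) * (piq ^ t * V) ^ d = piq ^ (r + t * d) * (U * V ^ d)"
    by (simp add: power_add algebra_simps)
  then show ?thesis using assms by simp
qed

lemma unit_nz: "(Z :: 'a::dpar qo) dvd 1 \<Longrightarrow> piq ^ t * Z \<noteq> 0"
proof
  assume "Z dvd 1" "piq ^ t * Z = 0"
  then have "(piq :: 'a qo) ^ t * Z = piq ^ t * 0" by simp
  then have "Z = 0" by (rule pi_pow_cancel)
  then show False using \<open>Z dvd 1\<close> by simp
qed

lemma shift_exp:
  fixes r R d :: nat
  assumes "r \<le> R" "r mod d = R mod d"
  shows "r + ((R - r) div d) * d = R"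
proof -
  have "R mod d = r mod d" using assms(2) by simp
  then have "d dvd R - r" using mod_eq_dvd_iff_nat[OF assms(1), where q=d] by simp
  then show ?thesis using assms(1) by simp
qed

lemma core_qo:
  fixes A :: "nat \<Rightarrow> 'a::dpar qo" and w r :: "nat \<Rightarrow> nat" and U :: "nat \<Rightarrow> 'a qo"
  assumes d: "d = 2 * m" and m: "odd m"
    and inj: "inj_on w {..<6}" and ws: "\<And>k. k < 6 \<Longrightarrow> w k < s"
    and A: "\<And>k. k < 6 \<Longrightarrow> A (w k) = piq ^ r k * U k"
    and units: "\<And>k. k < 6 \<Longrightarrow> U k dvd 1"
    and lev: "\<And>k. k < 6 \<Longrightarrow> r k mod d = r 0 mod d"
    and pairs: "\<And>k. k < 3 \<Longrightarrow> 2 dvd U (2 * k) - U (2 * k + 1)"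
  shows "\<exists>X. (\<exists>i<s. X i \<noteq> 0) \<and> (\<Sum>i<s. A i * X i ^ d) = 0"
proof -
  obtain k1 k2 Z1 Z2 Z3 Z4 where kk: "k1 < 3" "k2 < 3" "k1 \<noteq> k2"
    and Zu: "Z1 dvd 1" "Z2 dvd 1" "Z3 dvd 1" "Z4 dvd 1"
    and Z8: "(2::'a qo) ^ 3 dvd U (2 * k1) * Z1 ^ d + U (2 * k1 + 1) * Z2 ^ d + U (2 * k2) * Z3 ^ d + U (2 * k2 + 1) * Z4 ^ d"
    using mod8_core[OF units pairs d m] by blast
  define i1 where "i1 = 2 * k1"
  define i2 where "i2 = 2 * k1 + 1"
  define i3 where "i3 = 2 * k2"
  define i4 where "i4 = 2 * k2 + 1"
  have ilt: "i1 < 6" "i2 < 6" "i3 < 6" "i4 < 6" using kk by (simp_all add: i1_def i2_def i3_def i4_def)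
  have idist: "i1 \<noteq> i2" "i1 \<noteq> i3" "i1 \<noteq> i4" "i2 \<noteq> i3" "i2 \<noteq> i4" "i3 \<noteq> i4"
    using kk by (auto simp: i1_def i2_def i3_def i4_def)
  define p1 where "p1 = w i1"
  define p2 where "p2 = w i2"
  define p3 where "p3 = w i3"
  define p4 where "p4 = w i4"
  have pdist: "p1 \<noteq> p2" "p1 \<noteq> p3" "p1 \<noteq> p4" "p2 \<noteq> p3" "p2 \<noteq> p4" "p3 \<noteq> p4"
    using idist ilt inj unfolding p1_def p2_def p3_def p4_def inj_on_def by (auto simp del: lessThan_iff simp add: lessThan_iff)
  have ps: "p1 < s" "p2 < s" "p3 < s" "p4 < s" using ws ilt by (simp_all add: p1_def p2_def p3_def p4_def)
  obtain Y4 where Y4: "(U i1 * Z1 ^ d + U i2 * Z2 ^ d + U i3 * Z3 ^ d) + U i4 * Y4 ^ d = 0"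
    using hensel[OF units[OF ilt(4)] Zu(4) _ d m] Z8 unfolding i1_def i2_def i3_def i4_def by blast
  define T where "T = r i1 + r i2 + r i3 + r i4"
  define R where "R = r 0 mod d + d * T"
  have dpos: "d \<ge> 2" using d m by (cases m) auto
  have rle: "r i \<le> R" if "r i \<le> T" for i
  proof -
    have "1 * T \<le> d * T" by (rule mult_le_mono1) (use dpos in simp)
    then show ?thesis using that unfolding R_def by linarith
  qed
  have rmod: "r i mod d = R mod d" if "i < 6" for i
    using lev[OF that] unfolding R_def by simp
  define t where "t i = (R - r i) div d" for i
  have te: "r i + t i * d = R" if "i < 6" "r i \<le> T" for i
    unfolding t_def by (rule shift_exp[OF rle[OF that(2)] rmod[OF that(1)]])
  have Tle: "r i1 \<le> T" "r i2 \<le> T" "r i3 \<le> T" "r i4 \<le> T" unfolding T_def by simp_all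
  define X where "X i = (if i = p1 then piq ^ t i1 * Z1 else if i = p2 then piq ^ t i2 * Z2
      else if i = p3 then piq ^ t i3 * Z3 else if i = p4 then piq ^ t i4 * Y4 else 0)" for i
  have X1: "X p1 = piq ^ t i1 * Z1" and X2: "X p2 = piq ^ t i2 * Z2"
    and X3: "X p3 = piq ^ t i3 * Z3" and X4: "X p4 = piq ^ t i4 * Y4"
    using pdist by (simp_all add: X_def)
  have Xo: "X i = 0" if "i \<notin> {p1, p2, p3, p4}" for i using that by (simp add: X_def)
  have Ap: "A p1 = piq ^ r i1 * U i1" "A p2 = piq ^ r i2 * U i2" "A p3 = piq ^ r i3 * U i3" "A p4 = piq ^ r i4 * U i4"
    using A ilt by (simp_all add: p1_def p2_def p3_def p4_def)
  have "(\<Sum>i<s. A i * X i ^ d) = (\<Sum>i\<in>{p1, p2, p3, p4}. A i * X i ^ d)"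
  proof (rule sum.mono_neutral_right)
    show "finite {..<s}" by simp
    show "{p1, p2, p3, p4} \<subseteq> {..<s}" using ps by auto
    have z: "(0::'a qo) ^ d = 0" using dpos by (simp add: power_0_left)
    show "\<forall>i\<in>{..<s} - {p1, p2, p3, p4}. A i * X i ^ d = 0" using Xo z by auto
  qed
  also have "\<dots> = A p1 * X p1 ^ d + (A p2 * X p2 ^ d + (A p3 * X p3 ^ d + A p4 * X p4 ^ d))"
    using pdist by simp
  also have "\<dots> = piq ^ R * (U i1 * Z1 ^ d) + (piq ^ R * (U i2 * Z2 ^ d) + (piq ^ R * (U i3 * Z3 ^ d) + piq ^ R * (U i4 * Y4 ^ d)))"
    unfolding Ap X1 X2 X3 X4
    by (simp only: term_eq[OF te[OF ilt(1) Tle(1)]] term_eq[OF te[OF ilt(2) Tle(2)]]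
        term_eq[OF te[OF ilt(3) Tle(3)]] term_eq[OF te[OF ilt(4) Tle(4)]])
  also have "\<dots> = piq ^ R * ((U i1 * Z1 ^ d + U i2 * Z2 ^ d + U i3 * Z3 ^ d) + U i4 * Y4 ^ d)"
    by (simp add: algebra_simps)
  also have "\<dots> = 0" unfolding Y4 by simp
  finally have "(\<Sum>i<s. A i * X i ^ d) = 0" .
  moreover have "X p1 \<noteq> 0" unfolding X1 by (rule unit_nz[OF Zu(1)])
  ultimately show ?thesis using ps(1) by blast
qed


context
  fixes T :: "'a::dpar itself"
begin

lemma AQ_Rep_eq: "(AQ (Rep_qo X) :: 'a qo) = X" by (rule Rep_qo_inverse)

lemma o_unit_iff: "o_unit (dval TYPE('a)) u \<longleftrightarrow> (AQ u :: 'a qo) dvd 1"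
proof
  assume "o_unit (dval TYPE('a)) u"
  then obtain v where "o_mul (dval TYPE('a)) u v = o_one" by (auto simp: o_unit_def)
  then have "(AQ (o_mul (dval TYPE('a)) u v) :: 'a qo) = AQ o_one" by simp
  then have "(AQ u :: 'a qo) * AQ v = 1" by (simp only: AQ_mul AQ_one)
  then show "(AQ u :: 'a qo) dvd 1" by (metis dvd_triv_left)
next
  assume "(AQ u :: 'a qo) dvd 1"
  then obtain V where V: "(AQ u :: 'a qo) * V = 1" by (auto elim: dvdE)
  have "(AQ (o_mul (dval TYPE('a)) u (Rep_qo V)) :: 'a qo) = AQ o_one"
    by (simp only: AQ_mul AQ_one AQ_Rep_eq V)
  then have "o_mul (dval TYPE('a)) u (Rep_qo V) = o_one" by (simp only: AQ_inj)
  then show "o_unit (dval TYPE('a)) u" unfolding o_unit_def by (rule exI)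
qed

lemma AQ_pi: "(AQ (o_pi (dval TYPE('a))) :: 'a qo) = piq" by (simp add: piq_def)

lemma decomp_iff:
  "(\<exists>u. o_unit (dval TYPE('a)) u \<and> a = o_mul (dval TYPE('a)) (o_pow (dval TYPE('a)) (o_pi (dval TYPE('a))) r) u)
   \<longleftrightarrow> (\<exists>U. U dvd 1 \<and> (AQ a :: 'a qo) = piq ^ r * U)"
proof
  assume "\<exists>u. o_unit (dval TYPE('a)) u \<and> a = o_mul (dval TYPE('a)) (o_pow (dval TYPE('a)) (o_pi (dval TYPE('a))) r) u"
  then obtain u where u: "o_unit (dval TYPE('a)) u" "a = o_mul (dval TYPE('a)) (o_pow (dval TYPE('a)) (o_pi (dval TYPE('a))) r) u"
    by blast
  have "(AQ a :: 'a qo) = piq ^ r * AQ u" unfolding u(2) by (simp only: AQ_mul AQ_pow AQ_pi)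
  then show "\<exists>U. U dvd 1 \<and> (AQ a :: 'a qo) = piq ^ r * U" using u(1) o_unit_iff by blast
next
  assume "\<exists>U. U dvd 1 \<and> (AQ a :: 'a qo) = piq ^ r * U"
  then obtain U where U: "U dvd 1" "(AQ a :: 'a qo) = piq ^ r * U" by blast
  have "(AQ (o_mul (dval TYPE('a)) (o_pow (dval TYPE('a)) (o_pi (dval TYPE('a))) r) (Rep_qo U)) :: 'a qo) = AQ a"
    by (simp only: AQ_mul AQ_pow AQ_pi AQ_Rep_eq U(2))
  then have "a = o_mul (dval TYPE('a)) (o_pow (dval TYPE('a)) (o_pi (dval TYPE('a))) r) (Rep_qo U)"
    by (simp only: AQ_inj)
  moreover have "o_unit (dval TYPE('a)) (Rep_qo U)" using U(1) by (simp only: o_unit_iff AQ_Rep_eq)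
  ultimately show "\<exists>u. o_unit (dval TYPE('a)) u \<and> a = o_mul (dval TYPE('a)) (o_pow (dval TYPE('a)) (o_pi (dval TYPE('a))) r) u"
    by blast
qed

lemma decomp:
  assumes "a \<noteq> o_zero"
  shows "(AQ (o_upart (dval TYPE('a)) a) :: 'a qo) dvd 1 \<and>
         (AQ a :: 'a qo) = piq ^ o_val (dval TYPE('a)) a * AQ (o_upart (dval TYPE('a)) a)"
proof -
  let ?D = "dval TYPE('a)"
  have nz: "(AQ a :: 'a qo) \<noteq> 0" using assms AQ_zero[where 'a='a] by (metis AQ_inj)
  obtain r U where rU: "U dvd 1" "(AQ a :: 'a qo) = piq ^ r * U" using val_exists[OF nz] by blast
  have ex: "\<exists>u. o_unit ?D u \<and> a = o_mul ?D (o_pow ?D (o_pi ?D) r) u"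
    by (rule decomp_iff[where a=a and r=r, THEN iffD2]) (rule exI[of _ U], rule conjI[OF rU(1) rU(2)])
  have val: "o_val ?D a = r"
    unfolding o_val_def
  proof (rule the1_equality)
    show "\<exists>!r. \<exists>u. o_unit ?D u \<and> a = o_mul ?D (o_pow ?D (o_pi ?D) r) u"
    proof (rule ex1I[of _ r])
      show "\<exists>u. o_unit ?D u \<and> a = o_mul ?D (o_pow ?D (o_pi ?D) r) u" by (rule ex)
    next
      fix r' assume "\<exists>u. o_unit ?D u \<and> a = o_mul ?D (o_pow ?D (o_pi ?D) r') u"
      then have "\<exists>U. U dvd 1 \<and> (AQ a :: 'a qo) = piq ^ r' * U" by (simp only: decomp_iff)
      then obtain U' where U': "U' dvd 1" "(AQ a :: 'a qo) = piq ^ r' * U'" by (elim exE conjE)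
      have "piq ^ r * U = piq ^ r' * U'" using U'(2) rU(2) by simp
      then show "r' = r" using val_unique[of U U' r r', OF rU(1) U'(1)] by simp
    qed
  qed (rule ex)
  have up: "(AQ (o_upart ?D a) :: 'a qo) = U"
  proof -
    have P: "o_unit ?D (Rep_qo U) \<and> a = o_mul ?D (o_pow ?D (o_pi ?D) (o_val ?D a)) (Rep_qo U)"
    proof
      show "o_unit ?D (Rep_qo U)" using rU(1) by (simp only: o_unit_iff AQ_Rep_eq)
      have "(AQ (o_mul ?D (o_pow ?D (o_pi ?D) (o_val ?D a)) (Rep_qo U)) :: 'a qo) = AQ a"
        by (simp only: AQ_mul AQ_pow AQ_pi AQ_Rep_eq val rU(2))
      then show "a = o_mul ?D (o_pow ?D (o_pi ?D) (o_val ?D a)) (Rep_qo U)" by (simp only: AQ_inj)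
    qed
    have "o_upart ?D a = Rep_qo U"
      unfolding o_upart_def
    proof (rule the1_equality)
      show "\<exists>!u. o_unit ?D u \<and> a = o_mul ?D (o_pow ?D (o_pi ?D) (o_val ?D a)) u"
      proof (rule ex1I[of _ "Rep_qo U"])
        show "o_unit ?D (Rep_qo U) \<and> a = o_mul ?D (o_pow ?D (o_pi ?D) (o_val ?D a)) (Rep_qo U)" by (rule P)
      next
        fix u assume h: "o_unit ?D u \<and> a = o_mul ?D (o_pow ?D (o_pi ?D) (o_val ?D a)) u"
        then have "(AQ u :: 'a qo) dvd 1" by (simp add: o_unit_iff)
        moreover have "(AQ a :: 'a qo) = piq ^ r * AQ u"
          using h unfolding val by (metis AQ_mul AQ_pow AQ_pi)
        moreover have "piq ^ r * AQ u = piq ^ r * U" using calculation(2) rU(2) by simp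
        ultimately have "AQ u = U" using val_unique[of "AQ u" U r r] rU(1) by simp
        then show "u = Rep_qo U" by (metis Abs_qo_inverse UNIV_I)
      qed
    qed (rule P)
    then show ?thesis by (simp add: AQ_Rep_eq)
  qed
  show ?thesis using rU up val by simp
qed

end


definition psq :: "(nat \<Rightarrow> nat) \<Rightarrow> nat \<Rightarrow> 'a::dpar qo" where
  "psq c n = (\<Sum>j<n. if c j = 1 then piq ^ j else 0)"

context
  fixes T :: "'a::dpar itself"
begin

lemma AQ_psum: "(AQ (pi_psum (dval TYPE('a)) c n) :: 'a qo) = psq c n"
proof (induction n)
  case 0 then show ?case by (simp add: psq_def AQ_zero)
next
  case (Suc n)
  have "(AQ (if c n = 1 then o_pow (dval TYPE('a)) (o_pi (dval TYPE('a))) n else o_zero) :: 'a qo)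
        = (if c n = 1 then piq ^ n else 0)"
    by (simp add: AQ_pow AQ_pi AQ_zero)
  then show ?case using Suc by (simp add: psq_def AQ_add)
qed

lemma o_dvd_iff: "o_dvd (dval TYPE('a)) x y \<longleftrightarrow> (AQ x :: 'a qo) dvd AQ y"
proof
  assume "o_dvd (dval TYPE('a)) x y"
  then obtain z where "y = o_mul (dval TYPE('a)) x z" by (auto simp: o_dvd_def)
  then have "(AQ y :: 'a qo) = AQ x * AQ z" by (simp add: AQ_mul)
  then show "(AQ x :: 'a qo) dvd AQ y" by simp
next
  assume "(AQ x :: 'a qo) dvd AQ y"
  then obtain Z where Z: "(AQ y :: 'a qo) = AQ x * Z" by (auto elim: dvdE)
  have "(AQ (o_mul (dval TYPE('a)) x (Rep_qo Z)) :: 'a qo) = AQ y"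
    by (simp only: AQ_mul AQ_Rep_eq Z)
  then have "y = o_mul (dval TYPE('a)) x (Rep_qo Z)" by (simp only: AQ_inj)
  then show "o_dvd (dval TYPE('a)) x y" unfolding o_dvd_def by (rule exI)
qed

lemma coeff_pred_iff:
  "(\<forall>n. o_dvd (dval TYPE('a)) (o_pow (dval TYPE('a)) (o_pi (dval TYPE('a))) n) (o_sub u (pi_psum (dval TYPE('a)) c n)))
   \<longleftrightarrow> (\<forall>n. (piq :: 'a qo) ^ n dvd AQ u - psq c n)"
  by (simp only: o_dvd_iff AQ_pow AQ_pi AQ_sub AQ_psum)

end

lemma psq2: "psq c 2 = (if c 0 = 1 then 1 else 0) + (if c 1 = 1 then piq else (0 :: 'a::dpar qo))"
  by (simp add: psq_def numeral_2_eq_2)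

lemma expansion:
  assumes U: "(U :: 'a::dpar qo) dvd 1"
  shows "\<exists>c. (\<forall>j. c j \<le> 1) \<and> c 0 = 1 \<and> (\<forall>n. piq ^ n dvd U - psq c n)"
proof -
  define step where "step x = (SOME p :: int \<times> 'a qo. (fst p = 0 \<or> fst p = 1) \<and> x = of_int (fst p) + piq * snd p)" for x
  have st: "(fst (step x) = 0 \<or> fst (step x) = 1) \<and> x = of_int (fst (step x)) + piq * snd (step x)" for x
  proof -
    obtain e y where "(e = 0 \<or> e = 1) \<and> x = of_int e + piq * y" using residue by blast
    then have "\<exists>p :: int \<times> 'a qo. (fst p = 0 \<or> fst p = 1) \<and> x = of_int (fst p) + piq * snd p"
      by (intro exI[of _ "(e, y)"]) simp
    then show ?thesis unfolding step_def by (rule someI_ex)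
  qed
  define rem where "rem = rec_nat U (\<lambda>n r. snd (step r))"
  have rem0: "rem 0 = U" and remS: "rem (Suc n) = snd (step (rem n))" for n by (simp_all add: rem_def)
  define c where "c n = nat (fst (step (rem n)))" for n
  have c01: "c n \<le> 1" for n using st[of "rem n"] by (auto simp: c_def)
  have cterm: "piq ^ n * (of_int (fst (step (rem n))) :: 'a qo) = (if c n = 1 then piq ^ n else 0)" for n
    using st[of "rem n"] by (auto simp: c_def)
  have inv: "U = psq c n + piq ^ n * rem n" for n
  proof (induction n)
    case 0 then show ?case by (simp add: psq_def rem0)
  next
    case (Suc n)
    have "piq ^ n * rem n = piq ^ n * of_int (fst (step (rem n))) + piq ^ Suc n * rem (Suc n)"
      using st[of "rem n"] unfolding remS by (metis distrib_left mult.assoc power_Suc2)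
    then show ?case using Suc unfolding cterm by (simp add: psq_def add.assoc)
  qed
  have c0: "c 0 = 1"
  proof (rule ccontr)
    assume "c 0 \<noteq> 1"
    then have "fst (step U) = 0" using st[of U] unfolding c_def rem0 by auto
    then have "U = piq * snd (step U)" using st[of U] by simp
    then have "piq dvd U" by (rule dvdI)
    then show False using pi_dvd_unit U by blast
  qed
  have "piq ^ n dvd U - psq c n" for n
  proof -
    have "U - psq c n = piq ^ n * rem n" using inv[of n] by (simp add: algebra_simps)
    then show ?thesis by simp
  qed
  then show ?thesis using c01 c0 by (intro exI[of _ c]) simp
qed

lemma c1_unique:
  assumes "(\<forall>j. c j \<le> 1)" "c 0 = 1" "(piq :: 'a::dpar qo) ^ 2 dvd U - psq c 2"
    and "(\<forall>j. c' j \<le> 1)" "c' 0 = 1" "(piq :: 'a qo) ^ 2 dvd U - psq c' 2"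
  shows "c 1 = c' 1"
proof (rule ccontr)
  assume ne: "c 1 \<noteq> c' 1"
  have "(piq :: 'a qo) ^ 2 dvd (U - psq c' 2) - (U - psq c 2)" using assms(3,6) by (rule dvd_diff[rotated])
  then have d: "(piq :: 'a qo) ^ 2 dvd psq c 2 - psq c' 2" by (simp add: algebra_simps)
  have "c 1 = 0 \<or> c 1 = 1" "c' 1 = 0 \<or> c' 1 = 1" using assms(1,4) le_Suc_eq[of _ 0] by auto
  then have "(c 1 = 1 \<and> c' 1 = 0) \<or> (c 1 = 0 \<and> c' 1 = 1)" using ne by auto
  then have "psq c 2 - psq c' 2 = piq \<or> psq c 2 - psq c' 2 = - (piq :: 'a qo)"
    using assms(2,5) unfolding psq2 by auto
  then have "(piq :: 'a qo) ^ 2 dvd piq" using d by (metis dvd_minus_iff)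
  then obtain z where "(piq :: 'a qo) = piq ^ 2 * z" unfolding dvd_def by blast
  then have "piq * 1 = piq * (piq * z)" by (simp add: power2_eq_square mult.assoc)
  then have "1 = piq * z" by (rule pi_cancel)
  then have "piq dvd (1 :: 'a qo)" by (metis dvd_triv_left)
  then show False using pi_not_unit by blast
qed

lemma pi_coeff_char:
  assumes U: "(AQ u :: 'a::dpar qo) dvd 1"
  shows "\<exists>c. (\<forall>j. c j \<le> 1) \<and> c 0 = 1 \<and> pi_coeff (dval TYPE('a)) u = c 1 \<and> (piq :: 'a qo) ^ 2 dvd AQ u - psq c 2"
proof -
  let ?D = "dval TYPE('a)"
  obtain c where c: "\<forall>j. c j \<le> 1" "c 0 = 1" "\<forall>n. (piq :: 'a qo) ^ n dvd AQ u - psq c n"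
    using expansion[OF U] by blast
  let ?Pr = "\<lambda>c1. \<exists>c. (\<forall>j. c j \<le> 1) \<and> c 0 = 1 \<and> c 1 = c1 \<and>
       (\<forall>n. o_dvd ?D (o_pow ?D (o_pi ?D) n) (o_sub u (pi_psum ?D c n)))"
  have pr: "?Pr c1 \<longleftrightarrow> (\<exists>c. (\<forall>j. c j \<le> 1) \<and> c 0 = 1 \<and> c 1 = c1 \<and> (\<forall>n. (piq :: 'a qo) ^ n dvd AQ u - psq c n))" for c1
    by (simp only: coeff_pred_iff)
  have "pi_coeff ?D u = c 1"
    unfolding pi_coeff_def
  proof (rule the1_equality)
    show "?Pr (c 1)" unfolding pr using c by blast
    show "\<exists>!c1. ?Pr c1"
    proof (rule ex1I[of _ "c 1"])
      show "?Pr (c 1)" unfolding pr using c by blast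
    next
      fix c1 assume "?Pr c1"
      then obtain c' where c': "\<forall>j. c' j \<le> 1" "c' 0 = 1" "c' 1 = c1" "\<forall>n. (piq :: 'a qo) ^ n dvd AQ u - psq c' n"
        unfolding pr by blast
      have "c' 1 = c 1" using c1_unique[of c' "AQ u" c, OF c'(1) c'(2) c'(4)[rule_format, of 2] c(1) c(2) c(3)[rule_format, of 2]] .
      then show "c1 = c 1" using c'(3) by simp
    qed
  qed
  then show ?thesis using c by (intro exI[of _ c]) simp
qed

lemma pi_coeff_eq:
  assumes "(AQ u :: 'a::dpar qo) dvd 1" "(AQ u' :: 'a qo) dvd 1"
    and "pi_coeff (dval TYPE('a)) u = pi_coeff (dval TYPE('a)) u'"
  shows "2 dvd (AQ u - AQ u' :: 'a qo)"
proof -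
  obtain c where c: "\<forall>j. c j \<le> 1" "c 0 = 1" "pi_coeff (dval TYPE('a)) u = c 1" "(piq :: 'a qo) ^ 2 dvd AQ u - psq c 2"
    using pi_coeff_char[OF assms(1)] by blast
  obtain c' where c': "\<forall>j. c' j \<le> 1" "c' 0 = 1" "pi_coeff (dval TYPE('a)) u' = c' 1" "(piq :: 'a qo) ^ 2 dvd AQ u' - psq c' 2"
    using pi_coeff_char[OF assms(2)] by blast
  have "psq c 2 = (psq c' 2 :: 'a qo)" using c c' assms(3) by (simp add: psq2)
  then have e: "(AQ u - psq c 2) - (AQ u' - psq c' 2) = AQ u - (AQ u' :: 'a qo)" by simp
  have "(piq :: 'a qo) ^ 2 dvd (AQ u - psq c 2) - (AQ u' - psq c' 2)" by (rule dvd_diff[OF c(4) c'(4)])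
  then have "(piq :: 'a qo) ^ 2 dvd AQ u - AQ u'" unfolding e .
  moreover obtain e :: "'a qo" where "piq ^ 2 = 2 * e" using pi_sq by blast
  ultimately show ?thesis by (metis dvd_mult_left)
qed

lemma unit_class:
  assumes "(U :: 'a::dpar qo) dvd 1"
  shows "\<exists>e::int. (e = 0 \<or> e = 1) \<and> (\<exists>z. U = 1 + of_int e * piq + piq ^ 2 * z)"
proof -
  from assms[unfolded unit_iff] obtain t where t: "U = 1 + piq * t" ..
  obtain e y where ey: "(e = 0 \<or> e = 1)" "t = of_int e + piq * y" using residue by blast
  have "U = 1 + of_int e * piq + piq ^ 2 * y" unfolding t ey(2) by (simp add: power2_eq_square algebra_simps)
  then show ?thesis using ey(1) by blast
qed

lemma same_class:
  assumes "(U :: 'a::dpar qo) = 1 + of_int e * piq + piq ^ 2 * z" "U' = 1 + of_int e * piq + piq ^ 2 * z'"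
  shows "2 dvd U - U'"
proof -
  obtain f :: "'a qo" where f: "piq ^ 2 = 2 * f" using pi_sq by blast
  have "U - U' = 2 * (f * (z - z'))" unfolding assms f by (simp add: algebra_simps)
  then show ?thesis by simp
qed


lemma AQ_diag: "(AQ (diag_form (dval TYPE('a)) d a x n) :: 'a::dpar qo) = (\<Sum>i<n. AQ (a i) * AQ (x i) ^ d)"
  by (induction n) (simp_all add: AQ_zero AQ_add AQ_mul AQ_pow)

lemma hnz:
  assumes "\<exists>X :: nat \<Rightarrow> 'a::dpar qo. (\<exists>i<s. X i \<noteq> 0) \<and> (\<Sum>i<s. AQ (a i) * X i ^ d) = 0"
  shows "has_nontrivial_zero (dval TYPE('a)) d s a"
proof -
  obtain X :: "nat \<Rightarrow> 'a qo" where X: "\<exists>i<s. X i \<noteq> 0" "(\<Sum>i<s. AQ (a i) * X i ^ d) = 0" using assms by blast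
  define x where "x i = Rep_qo (X i)" for i
  have AX: "(AQ (x i) :: 'a qo) = X i" for i by (simp add: x_def Rep_qo_inverse)
  obtain i where i: "i < s" "X i \<noteq> 0" using X(1) by blast
  have "x i \<noteq> o_zero"
  proof
    assume "x i = o_zero"
    then have "(AQ (x i) :: 'a qo) = AQ o_zero" by simp
    then show False using i(2) by (simp add: AX AQ_zero)
  qed
  moreover have "diag_form (dval TYPE('a)) d a x s = o_zero"
  proof -
    have "(AQ (diag_form (dval TYPE('a)) d a x s) :: 'a qo) = AQ o_zero"
      by (simp only: AQ_diag AX X(2) AQ_zero)
    then show ?thesis by (simp only: AQ_inj)
  qed
  ultimately show ?thesis unfolding has_nontrivial_zero_def using i(1) by blast
qed

lemma pick_pair:
  assumes "finite B" "3 \<le> card B" "\<And>x. x \<in> B \<Longrightarrow> f x = (0::int) \<or> f x = 1"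
  shows "\<exists>x\<in>B. \<exists>y\<in>B. x \<noteq> y \<and> f x = f y"
proof -
  have "B \<noteq> {}" using assms(2) by auto
  then obtain x where x: "x \<in> B" by blast
  have "2 \<le> card (B - {x})" using assms(1,2) x by simp
  then have "card (B - {x}) \<noteq> 0" by simp
  then have "B - {x} \<noteq> {}" by (metis card.empty)
  then obtain y where y: "y \<in> B - {x}" by blast
  have "1 \<le> card (B - {x} - {y})" using assms(1,2) x y by simp
  then have "card (B - {x} - {y}) \<noteq> 0" by simp
  then have "B - {x} - {y} \<noteq> {}" by (metis card.empty)
  then obtain z where z: "z \<in> B - {x} - {y}" by blast
  have "f x = f y \<or> f x = f z \<or> f y = f z" using assms(3)[of x] assms(3)[of y] assms(3)[of z] x y z by auto
  moreover have "x \<in> B" "y \<in> B" "z \<in> B" "x \<noteq> y" "x \<noteq> z" "y \<noteq> z" using x y z by auto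
  ultimately show ?thesis by (elim disjE) (intro bexI conjI; assumption)+
qed

lemma less6: "k < (6::nat) \<Longrightarrow> k = 0 \<or> k = 1 \<or> k = 2 \<or> k = 3 \<or> k = 4 \<or> k = 5" by auto
lemma less3: "k < (3::nat) \<Longrightarrow> k = 0 \<or> k = 1 \<or> k = 2" by auto


lemma gen_part1:
  fixes m d s :: nat and a :: "nat \<Rightarrow> oelt"
  assumes d: "d = 2 * m" and m: "odd m" and nz: "\<forall>i<s. a i \<noteq> o_zero"
    and "\<exists>v :: nat \<Rightarrow> nat. inj_on v {..<6} \<and> (\<forall>k<6. v k < s) \<and>
            (\<forall>k<6. level (dval TYPE('a::dpar)) d (a (v k)) = level (dval TYPE('a)) d (a (v 0))) \<and>
            (\<forall>k<3. var_pi_coeff (dval TYPE('a)) (a (v (2*k))) = var_pi_coeff (dval TYPE('a)) (a (v (2*k+1))))"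
  shows "has_nontrivial_zero (dval TYPE('a)) d s a"
proof -
  let ?D = "dval TYPE('a)"
  define UU where "UU i = (AQ (o_upart ?D (a i)) :: 'a qo)" for i
  have dec: "UU i dvd 1 \<and> (AQ (a i) :: 'a qo) = piq ^ o_val ?D (a i) * UU i" if "i < s" for i
    unfolding UU_def using decomp[OF nz[rule_format, OF that]] .
    from assms(4) obtain v :: "nat \<Rightarrow> nat" where v: "inj_on v {..<6}" "\<forall>k<6. v k < s"
      "\<forall>k<6. level ?D d (a (v k)) = level ?D d (a (v 0))"
      "\<forall>k<3. var_pi_coeff ?D (a (v (2*k))) = var_pi_coeff ?D (a (v (2*k+1)))" by blast
    have "\<exists>X. (\<exists>i<s. X i \<noteq> 0) \<and> (\<Sum>i<s. (AQ (a i) :: 'a qo) * X i ^ d) = 0"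
    proof (rule core_qo[OF d m v(1), where r = "\<lambda>k. o_val ?D (a (v k))" and U = "\<lambda>k. UU (v k)"])
      show vs: "v k < s" if "k < 6" for k using v(2) that by simp
      show "(AQ (a (v k)) :: 'a qo) = piq ^ o_val ?D (a (v k)) * UU (v k)" if "k < 6" for k
        using dec[OF vs[OF that]] by (rule conjunct2)
      show "UU (v k) dvd 1" if "k < 6" for k using dec[OF vs[OF that]] by (rule conjunct1)
      show "o_val ?D (a (v k)) mod d = o_val ?D (a (v 0)) mod d" if "k < 6" for k
        using v(3)[rule_format, OF that] unfolding level_def .
      show "2 dvd UU (v (2 * k)) - UU (v (2 * k + 1))" if "k < 3" for k
      proof -
        have s1: "v (2 * k) < s" "v (2 * k + 1) < s" using v(2) that by simp_all
        show ?thesis unfolding UU_def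
          by (rule pi_coeff_eq) (use dec[OF s1(1)] dec[OF s1(2)] v(4) that in \<open>simp_all add: UU_def var_pi_coeff_def\<close>)
      qed
    qed
    then show "has_nontrivial_zero ?D d s a" by (rule hnz)
qed


lemma gen_part2:
  fixes m d s :: nat and a :: "nat \<Rightarrow> oelt"
  assumes d: "d = 2 * m" and m: "odd m" and nz: "\<forall>i<s. a i \<noteq> o_zero"
    and "\<exists>I. I \<subseteq> {..<s} \<and> card I = 7 \<and>
            (\<forall>i\<in>I. \<forall>j\<in>I. level (dval TYPE('a::dpar)) d (a i) = level (dval TYPE('a)) d (a j))"
  shows "has_nontrivial_zero (dval TYPE('a)) d s a"
proof -
  let ?D = "dval TYPE('a)"
  define UU where "UU i = (AQ (o_upart ?D (a i)) :: 'a qo)" for i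
  have dec: "UU i dvd 1 \<and> (AQ (a i) :: 'a qo) = piq ^ o_val ?D (a i) * UU i" if "i < s" for i
    unfolding UU_def using decomp[OF nz[rule_format, OF that]] .
    from assms(4) obtain I where I: "I \<subseteq> {..<s}" "card I = 7" "\<forall>i\<in>I. \<forall>j\<in>I. level ?D d (a i) = level ?D d (a j)"
      by blast
    have fI: "finite I" using I(1) finite_subset by blast
    define cls where "cls i = (SOME e::int. (e = 0 \<or> e = 1) \<and> (\<exists>z. UU i = 1 + of_int e * piq + piq ^ 2 * z))" for i
    have clsP: "(cls i = 0 \<or> cls i = 1) \<and> (\<exists>z. UU i = 1 + of_int (cls i) * piq + piq ^ 2 * z)" if "i \<in> I" for i
    proof -
      have "i < s" using I(1) that by blast
      then have "UU i dvd 1" using dec by blast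
      then show ?thesis unfolding cls_def by (rule someI_ex[OF unit_class])
    qed
    have cls01: "cls i = 0 \<or> cls i = 1" if "i \<in> I" for i using clsP[OF that] by blast
    have pr: "\<exists>x\<in>B. \<exists>y\<in>B. x \<noteq> y \<and> cls x = cls y" if "B \<subseteq> I" "3 \<le> card B" for B
    proof (rule pick_pair)
      show "finite B" using finite_subset[OF that(1) fI] .
      show "3 \<le> card B" by (rule that(2))
      show "cls x = 0 \<or> cls x = 1" if "x \<in> B" for x using cls01 \<open>B \<subseteq> I\<close> that by blast
    qed
    have "\<exists>x\<in>I. \<exists>y\<in>I. x \<noteq> y \<and> cls x = cls y" using pr[of I] I(2) by simp
    then obtain b0 b1 where b01: "b0 \<in> I" "b1 \<in> I" "b0 \<noteq> b1" "cls b0 = cls b1" by blast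
    define I1 where "I1 = I - {b0, b1}"
    have cI1: "card I1 = 5" using I(2) b01 fI by (simp add: I1_def card_Diff_subset)
    have "\<exists>x\<in>I1. \<exists>y\<in>I1. x \<noteq> y \<and> cls x = cls y" using pr[of I1] cI1 unfolding I1_def by auto
    then obtain b2 b3 where b23: "b2 \<in> I1" "b3 \<in> I1" "b2 \<noteq> b3" "cls b2 = cls b3" by blast
    define I2 where "I2 = I1 - {b2, b3}"
    have cI2: "card I2 = 3" using cI1 b23 fI by (simp add: I2_def I1_def card_Diff_subset)
    have "\<exists>x\<in>I2. \<exists>y\<in>I2. x \<noteq> y \<and> cls x = cls y" using pr[of I2] cI2 unfolding I2_def I1_def by auto
    then obtain b4 b5 where b45: "b4 \<in> I2" "b5 \<in> I2" "b4 \<noteq> b5" "cls b4 = cls b5" by blast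
    define L where "L = [b0, b1, b2, b3, b4, b5]"
    have dL: "distinct L" using b01 b23 b45 by (auto simp: L_def I1_def I2_def)
    have LI: "L ! k \<in> I" if "k < 6" for k
      using less6[OF that] b01 b23 b45 by (auto simp: L_def I1_def I2_def)
    have inj: "inj_on (\<lambda>k. L ! k) {..<6}"
      using dL by (simp add: inj_on_nth L_def)
    have "\<exists>X. (\<exists>i<s. X i \<noteq> 0) \<and> (\<Sum>i<s. (AQ (a i) :: 'a qo) * X i ^ d) = 0"
    proof (rule core_qo[OF d m inj, where r = "\<lambda>k. o_val ?D (a (L ! k))" and U = "\<lambda>k. UU (L ! k)"])
      show Ls: "L ! k < s" if "k < 6" for k
      proof -
        have "L ! k \<in> {..<s}" using I(1) LI[OF that] by (rule subsetD)
        then show ?thesis by simp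
      qed
      show "(AQ (a (L ! k)) :: 'a qo) = piq ^ o_val ?D (a (L ! k)) * UU (L ! k)" if "k < 6" for k
        using dec[OF Ls[OF that]] by (rule conjunct2)
      show "UU (L ! k) dvd 1" if "k < 6" for k using dec[OF Ls[OF that]] by (rule conjunct1)
      show "o_val ?D (a (L ! k)) mod d = o_val ?D (a (L ! 0)) mod d" if "k < 6" for k
        using I(3)[rule_format, OF LI[OF that] LI[OF zero_less_numeral]] unfolding level_def .
      show "2 dvd UU (L ! (2 * k)) - UU (L ! (2 * k + 1))" if "k < 3" for k
      proof -
        have i1: "L ! (2 * k) \<in> I" "L ! (2 * k + 1) \<in> I" using LI that by simp_all
        have ce: "cls (L ! (2 * k)) = cls (L ! (2 * k + 1))"
          using less3[OF that] b01 b23 b45 by (auto simp: L_def)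
        obtain z where z: "UU (L ! (2 * k)) = 1 + of_int (cls (L ! (2 * k))) * piq + piq ^ 2 * z"
          using clsP[OF i1(1)] by blast
        obtain z' where z': "UU (L ! (2 * k + 1)) = 1 + of_int (cls (L ! (2 * k + 1))) * piq + piq ^ 2 * z'"
          using clsP[OF i1(2)] by blast
        show ?thesis by (rule same_class[OF z z'[folded ce]])
      qed
    qed
    then show "has_nontrivial_zero ?D d s a" by (rule hnz)
qed


lemma main_generic:
  fixes m d s :: nat and a :: "nat \<Rightarrow> oelt"
  assumes d: "d = 2 * m" and m: "odd m" and nz: "\<forall>i<s. a i \<noteq> o_zero"
  shows "((\<exists>v :: nat \<Rightarrow> nat. inj_on v {..<6} \<and> (\<forall>k<6. v k < s) \<and>
            (\<forall>k<6. level (dval TYPE('a::dpar)) d (a (v k)) = level (dval TYPE('a)) d (a (v 0))) \<and>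
            (\<forall>k<3. var_pi_coeff (dval TYPE('a)) (a (v (2*k))) = var_pi_coeff (dval TYPE('a)) (a (v (2*k+1)))))
          \<longrightarrow> has_nontrivial_zero (dval TYPE('a)) d s a)
       \<and> ((\<exists>I. I \<subseteq> {..<s} \<and> card I = 7 \<and>
            (\<forall>i\<in>I. \<forall>j\<in>I. level (dval TYPE('a)) d (a i) = level (dval TYPE('a)) d (a j)))
          \<longrightarrow> has_nontrivial_zero (dval TYPE('a)) d s a)"
  using gen_part1[OF d m nz] gen_part2[OF d m nz] by blast


datatype tA2 = TA2
datatype tAm2 = TAm2
datatype tA10 = TA10
datatype tAm10 = TAm10
datatype tBm1 = TBm1
datatype tBm5 = TBm5

instantiation tA2 :: dpar begin
definition dval_tA2 :: "tA2 itself \<Rightarrow> int" where "dval_tA2 t = 2"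
instance by standard (simp add: dval_tA2_def)
end
instantiation tAm2 :: dpar begin
definition dval_tAm2 :: "tAm2 itself \<Rightarrow> int" where "dval_tAm2 t = -2"
instance by standard (simp add: dval_tAm2_def)
end
instantiation tA10 :: dpar begin
definition dval_tA10 :: "tA10 itself \<Rightarrow> int" where "dval_tA10 t = 10"
instance by standard (simp add: dval_tA10_def)
end
instantiation tAm10 :: dpar begin
definition dval_tAm10 :: "tAm10 itself \<Rightarrow> int" where "dval_tAm10 t = -10"
instance by standard (simp add: dval_tAm10_def)
end
instantiation tBm1 :: dpar begin
definition dval_tBm1 :: "tBm1 itself \<Rightarrow> int" where "dval_tBm1 t = -1"
instance by standard (simp add: dval_tBm1_def)
end
instantiation tBm5 :: dpar begin
definition dval_tBm5 :: "tBm5 itself \<Rightarrow> int" where "dval_tBm5 t = -5"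
instance by standard (simp add: dval_tBm5_def)
end

theorem lemma9:
  fixes D :: int and m d s :: nat and a :: "nat \<Rightarrow> oelt"
  assumes "D \<in> {2, -2, 10, -10, -1, -5}"
    and "d = 2 * m" and "odd m" and "m \<ge> 3"
    and "\<forall>i<s. a i \<noteq> o_zero"
  shows "((\<exists>v :: nat \<Rightarrow> nat. inj_on v {..<6} \<and> (\<forall>k<6. v k < s) \<and>
            (\<forall>k<6. level D d (a (v k)) = level D d (a (v 0))) \<and>
            (\<forall>k<3. var_pi_coeff D (a (v (2*k))) = var_pi_coeff D (a (v (2*k+1)))))
          \<longrightarrow> has_nontrivial_zero D d s a)
       \<and> ((\<exists>I. I \<subseteq> {..<s} \<and> card I = 7 \<and>
            (\<forall>i\<in>I. \<forall>j\<in>I. level D d (a i) = level D d (a j)))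
          \<longrightarrow> has_nontrivial_zero D d s a)"
proof -
  from assms(1) show ?thesis
  proof (elim insertE emptyE)
    assume "D = 2"
    then have h: "dval TYPE(tA2) = D" by (simp add: dval_tA2_def)
    show ?thesis using main_generic[where 'a=tA2, OF assms(2,3,5)] unfolding h .
  next
    assume "D = -2"
    then have h: "dval TYPE(tAm2) = D" by (simp add: dval_tAm2_def)
    show ?thesis using main_generic[where 'a=tAm2, OF assms(2,3,5)] unfolding h .
  next
    assume "D = 10"
    then have h: "dval TYPE(tA10) = D" by (simp add: dval_tA10_def)
    show ?thesis using main_generic[where 'a=tA10, OF assms(2,3,5)] unfolding h .
  next
    assume "D = -10"
    then have h: "dval TYPE(tAm10) = D" by (simp add: dval_tAm10_def)
    show ?thesis using main_generic[where 'a=tAm10, OF assms(2,3,5)] unfolding h .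
  next
    assume "D = -1"
    then have h: "dval TYPE(tBm1) = D" by (simp add: dval_tBm1_def)
    show ?thesis using main_generic[where 'a=tBm1, OF assms(2,3,5)] unfolding h .
  next
    assume "D = -5"
    then have h: "dval TYPE(tBm5) = D" by (simp add: dval_tBm5_def)
    show ?thesis using main_generic[where 'a=tBm5, OF assms(2,3,5)] unfolding h .
  qed
qed


end
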